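(* Let $n\ge3$, $1\le j\le n-1$, $A\in\mathrm{GL}(n)$, and let $K$ and $L$ be origin-symmetric convex bodies with non-empty interior in $\mathbb{R}^n$. If $K$ is the $j$-projection body of $L$, then $AK$ is the $j$-projection body of $|\det A|^{\frac{1}{n-j}}A^{-\mathrm{T}}L$. In particular, the class of $j$-projection bodies is $\mathrm{GL}(n)$ invariant.
   Context: $K$ is called the $j$-projection body of $L$ if $\mathrm{vol}_j(K|E^\perp)=\mathrm{vol}_{n-j}(L|E)$ for every $(n-j)$-dimensional linear subspace $E$ of $\mathbb{R}^n$, where $K|E$ denotes orthogonal projection onto $E$. The class of $j$-projection bodies is the closure in the Hausdorff metric of the set of all $j$-projection bodies of origin-symmetric convex bodies with non-empty interior. $A^{-\mathrm{T}}$ is the inverse transpose of $A$. *)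

theory Defs
  imports "HOL-Analysis.Analysis"
begin

definition convex_body :: "'a::euclidean_space set \<Rightarrow> bool" where
  "convex_body K \<longleftrightarrow> compact K \<and> convex K \<and> K \<noteq> {}"

definition origin_symmetric :: "'a::real_vector set \<Rightarrow> bool" where
  "origin_symmetric K \<longleftrightarrow> (\<forall>x\<in>K. - x \<in> K)"

definition proj_onto :: "'a::real_inner set \<Rightarrow> 'a set \<Rightarrow> 'a set" where
  "proj_onto K E = {p \<in> E. \<exists>x\<in>K. \<forall>e\<in>E. inner (x - p) e = 0}"

definition orthonormal_basis_of :: "'a::euclidean_space set \<Rightarrow> nat \<Rightarrow> (nat \<Rightarrow> 'a) \<Rightarrow> bool" where
  "orthonormal_basis_of F k b \<longleftrightarrow>
     (\<forall>i<k. \<forall>l<k. inner (b i) (b l) = (if i = l then 1 else 0)) \<and> span (b ` {..<k}) = F"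

text \<open>The (dim F)-dimensional volume of a set X contained in the linear subspace F:
  Lebesgue measure on R^k (k = dim F) of the preimage of X under the linear isometry
  R^k -> F given by an orthonormal basis of F.\<close>
definition subspace_volume :: "'a::euclidean_space set \<Rightarrow> 'a set \<Rightarrow> real" where
  "subspace_volume F X =
     (let k = dim F; b = (SOME b. orthonormal_basis_of F k b) in
      measure (PiM {..<k} (\<lambda>_. lborel))
        ((\<lambda>x. \<Sum>i<k. x i *\<^sub>R b i) -` X \<inter> space (PiM {..<k} (\<lambda>_. lborel))))"

definition is_j_projection_body :: "nat \<Rightarrow> 'a::euclidean_space set \<Rightarrow> 'a set \<Rightarrow> bool" where
  "is_j_projection_body j K L \<longleftrightarrow>
     (\<forall>E. subspace E \<and> dim E = DIM('a) - j \<longrightarrow>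
        subspace_volume (orthogonal_comp E) (proj_onto K (orthogonal_comp E)) =
        subspace_volume E (proj_onto L E))"

definition hausdorff_dist :: "'a::metric_space set \<Rightarrow> 'a set \<Rightarrow> real" where
  "hausdorff_dist S T = max (SUP x\<in>S. infdist x T) (SUP y\<in>T. infdist y S)"

text \<open>The class of j-projection bodies: Hausdorff closure (within nonempty compact sets) of
  the set of j-projection bodies of origin-symmetric convex bodies with non-empty interior.\<close>
definition j_projection_class :: "nat \<Rightarrow> 'a::euclidean_space set set" where
  "j_projection_class j =
     (let P = {K. convex_body K \<and> origin_symmetric K \<and>
                  (\<exists>L. convex_body L \<and> origin_symmetric L \<and> interior L \<noteq> {} \<and>
                       is_j_projection_body j K L)}
      in {C. compact C \<and> C \<noteq> {} \<and>
             (\<exists>X. (\<forall>i::nat. X i \<in> P) \<and> (\<lambda>i. hausdorff_dist (X i) C) \<longlonglongrightarrow> 0)})"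

end

theory Submission
  imports Defs
begin

proposition
 fixes f :: "real^'n \<Rightarrow> real^'n"
  assumes "linear f" "S \<in> lmeasurable"
  shows measurable_linear_image': "(f ` S) \<in> lmeasurable"
    and measure_linear_image': "measure lebesgue (f ` S) = \<bar>det (matrix f)\<bar> * measure lebesgue S" (is "?Q f S")
proof -
  have "\<forall>S \<in> lmeasurable. (f ` S) \<in> lmeasurable \<and> ?Q f S"
  proof (rule induct_linear_elementary [OF \<open>linear f\<close>]; intro ballI)
    fix f g and S :: "(real,'n) vec set"
    assume "linear f" and "linear g"
      and f [rule_format]: "\<forall>S \<in> lmeasurable. f ` S \<in> lmeasurable \<and> ?Q f S"
      and g [rule_format]: "\<forall>S \<in> lmeasurable. g ` S \<in> lmeasurable \<and> ?Q g S"
      and S: "S \<in> lmeasurable"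
    then have gS: "g ` S \<in> lmeasurable"
      by blast
    show "(f \<circ> g) ` S \<in> lmeasurable \<and> ?Q (f \<circ> g) S"
      using f [OF gS] g [OF S] matrix_compose [OF \<open>linear g\<close> \<open>linear f\<close>]
      by (simp add: o_def image_comp abs_mult det_mul)
  next
    fix f :: "real^'n::_ \<Rightarrow> real^'n::_" and i and S :: "(real^'n::_) set"
    assume "linear f" and 0: "\<And>x. f x $ i = 0" and "S \<in> lmeasurable"
    then have "\<not> inj f"
      by (metis (full_types) linear_injective_imp_surjective one_neq_zero surjE vec_component)
    have detf: "det (matrix f) = 0"
      using \<open>\<not> inj f\<close> det_nz_iff_inj[OF \<open>linear f\<close>] by blast
    show "f ` S \<in> lmeasurable \<and> ?Q f S"
    proof
      show "f ` S \<in> lmeasurable"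
        using lmeasurable_iff_indicator_has_integral \<open>linear f\<close> \<open>\<not> inj f\<close> negligible_UNIV negligible_linear_singular_image by blast
      have "measure lebesgue (f ` S) = 0"
        by (meson \<open>\<not> inj f\<close> \<open>linear f\<close> negligible_imp_measure0 negligible_linear_singular_image)
      also have "\<dots> = \<bar>det (matrix f)\<bar> * measure lebesgue S"
        by (simp add: detf)
      finally show "?Q f S" .
    qed
  next
    fix c and S :: "(real^'n::_) set"
    assume "S \<in> lmeasurable"
    show "(\<lambda>a. \<chi> i. c i * a $ i) ` S \<in> lmeasurable \<and> ?Q (\<lambda>a. \<chi> i. c i * a $ i) S"
    proof
      show "(\<lambda>a. \<chi> i. c i * a $ i) ` S \<in> lmeasurable"
        by (simp add: \<open>S \<in> lmeasurable\<close> measurable_stretch)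
      show "?Q (\<lambda>a. \<chi> i. c i * a $ i) S"
        by (simp add: measure_stretch [OF \<open>S \<in> lmeasurable\<close>, of c] axis_def matrix_def det_diagonal)
    qed
  next
    fix m :: "'n" and n :: "'n" and S :: "(real, 'n) vec set"
    assume "m \<noteq> n" and "S \<in> lmeasurable"
    let ?h = "\<lambda>v::(real, 'n) vec. \<chi> i. v $ Transposition.transpose m n i"
    have lin: "linear ?h"
      by (rule linearI) (simp_all add: plus_vec_def scaleR_vec_def)
    have meq: "measure lebesgue ((\<lambda>v::(real, 'n) vec. \<chi> i. v $ Transposition.transpose m n i) ` cbox a b)
             = measure lebesgue (cbox a b)" for a b
    proof (cases "cbox a b = {}")
      case True then show ?thesis
        by simp
    next
      case False
      then have him: "?h ` (cbox a b) \<noteq> {}"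
        by blast
      have eq: "?h ` (cbox a b) = cbox (?h a) (?h b)"
        by (auto simp: image_iff lambda_swap_Galois mem_box_cart) (metis transpose_involutory)+
      show ?thesis
        using him prod.permute [OF permutes_swap_id, where S=UNIV and g="\<lambda>i. (b - a)$i", symmetric]
        by (simp add: eq content_cbox_cart False)
    qed
    have "(\<chi> i j. if Transposition.transpose m n i = j then 1 else 0) = (\<chi> i j. if j = Transposition.transpose m n i then 1 else (0::real))"
      by (auto intro!: Cart_lambda_cong)
    then have "matrix ?h = transpose(\<chi> i j. mat 1 $ i $ Transposition.transpose m n j)"
      by (auto simp: matrix_eq transpose_def axis_def mat_def matrix_def)
    then have 1: "\<bar>det (matrix ?h)\<bar> = 1"
      by (simp add: det_permute_columns permutes_swap_id sign_swap_id abs_mult)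
    show "?h ` S \<in> lmeasurable \<and> ?Q ?h S"
      using measure_linear_sufficient [OF lin \<open>S \<in> lmeasurable\<close>] meq 1 by force
  next
    fix m n :: "'n" and S :: "(real, 'n) vec set"
    assume "m \<noteq> n" and "S \<in> lmeasurable"
    let ?h = "\<lambda>v::(real, 'n) vec. \<chi> i. if i = m then v $ m + v $ n else v $ i"
    have lin: "linear ?h"
      by (rule linearI) (auto simp: algebra_simps plus_vec_def scaleR_vec_def vec_eq_iff)
    have "matrix ?h = (\<chi> k. if k = m then row m (mat 1) + 1 *s row n (mat 1) else row k (mat 1))"
      using \<open>m \<noteq> n\<close> by (auto simp: matrix_def vec_eq_iff row_def mat_def axis_def)
    then have 1: "det(matrix ?h) = 1"
      using det_row_operation[OF \<open>m \<noteq> n\<close>, of "mat 1::real^'n^'n" 1] by simp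
    have meq: "measure lebesgue (?h ` (cbox a b)) = measure lebesgue (cbox a b)" for a b
    proof (cases "cbox a b = {}")
      case True then show ?thesis by simp
    next
      case False
      then have ne: "(+) (\<chi> i. if i = n then - a $ n else 0) ` cbox a b \<noteq> {}"
        by auto
      let ?v = "\<chi> i. if i = n then - a $ n else 0"
      have "?h ` cbox a b
            = (+) (\<chi> i. if i = m \<or> i = n then a $ n else 0) ` ?h ` (+) ?v ` (cbox a b)"
        using \<open>m \<noteq> n\<close> unfolding image_comp o_def by (force simp: vec_eq_iff)
      then have "measure lebesgue (?h ` (cbox a b))
               = measure lebesgue ((\<lambda>v. \<chi> i. if i = m then v $ m + v $ n else v $ i) `
                                   (+) ?v ` cbox a b)"
        by (rule ssubst) (rule measure_translation)
      also have "\<dots> = measure lebesgue ((\<lambda>v. \<chi> i. if i = m then v $ m + v $ n else v $ i) ` cbox (?v +a) (?v + b))"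
        by (metis (no_types, lifting) cbox_translation)
      also have "\<dots> = measure lebesgue ((+) ?v ` cbox a b)"
        apply (subst measure_shear_interval)
        using \<open>m \<noteq> n\<close> ne apply auto
        apply (simp add: cbox_translation)
        by (metis cbox_borel cbox_translation measure_completion sets_lborel)
      also have "\<dots> = measure lebesgue (cbox a b)"
        by (rule measure_translation)
        finally show ?thesis .
      qed
    show "?h ` S \<in> lmeasurable \<and> ?Q ?h S"
      using measure_linear_sufficient [OF lin \<open>S \<in> lmeasurable\<close>] meq 1 by force
  qed
  with assms show "(f ` S) \<in> lmeasurable" "?Q f S"
    by metis+
qed





definition oproj :: "'a::euclidean_space set \<Rightarrow> 'a \<Rightarrow> 'a" where
  "oproj F x = (THE p. p \<in> F \<and> x - p \<in> orthogonal_comp F)"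

lemma orth_compD: "z \<in> orthogonal_comp F \<Longrightarrow> y \<in> F \<Longrightarrow> inner y z = 0"
  by (auto simp: orthogonal_comp_def orthogonal_def)

lemma orth_compI: "(\<And>y. y \<in> F \<Longrightarrow> inner y z = 0) \<Longrightarrow> z \<in> orthogonal_comp F"
  by (auto simp: orthogonal_comp_def orthogonal_def)

lemma oproj_ex1:
  fixes F :: "'a::euclidean_space set"
  assumes "subspace F"
  shows "\<exists>!p. p \<in> F \<and> x - p \<in> orthogonal_comp F"
proof -
  have "x \<in> F + orthogonal_comp F" using subspace_sum_orthogonal_comp[OF assms] by simp
  then obtain p q where "p \<in> F" "q \<in> orthogonal_comp F" "x = p + q" by (meson set_plus_elim)
  then have ex: "p \<in> F \<and> x - p \<in> orthogonal_comp F" by simp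
  show ?thesis
  proof (rule ex1I[of _ p])
    show "p \<in> F \<and> x - p \<in> orthogonal_comp F" by fact
    fix p' assume h: "p' \<in> F \<and> x - p' \<in> orthogonal_comp F"
    have "p - p' \<in> F" using h ex assms by (simp add: subspace_diff)
    moreover have "p - p' \<in> orthogonal_comp F"
      using subspace_diff[OF subspace_orthogonal_comp, of "x - p'" F "x - p"] h ex by simp
    ultimately have "p - p' = 0" using orthogonal_Int_0[OF assms] by blast
    then show "p' = p" by simp
  qed
qed

context fixes F :: "'a::euclidean_space set" assumes subF: "subspace F"
begin

lemma oproj_in: "oproj F x \<in> F"
  and oproj_orth: "x - oproj F x \<in> orthogonal_comp F"
  using theI'[OF oproj_ex1[OF subF, of x]] by (auto simp: oproj_def)

lemma oproj_unique: "p \<in> F \<Longrightarrow> x - p \<in> orthogonal_comp F \<Longrightarrow> oproj F x = p"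
  using oproj_ex1[OF subF, of x] oproj_in oproj_orth by blast

lemma oproj_id: "x \<in> F \<Longrightarrow> oproj F x = x"
  by (rule oproj_unique) (auto simp: subspace_0[OF subspace_orthogonal_comp])

lemma oproj_zero: "x \<in> orthogonal_comp F \<Longrightarrow> oproj F x = 0"
  by (rule oproj_unique) (auto simp: subspace_0[OF subF])

lemma linear_oproj: "linear (oproj F)"
proof (rule linearI)
  fix x y
  show "oproj F (x + y) = oproj F x + oproj F y"
    apply (rule oproj_unique)
    using oproj_in oproj_orth subF subspace_orthogonal_comp
     apply (simp add: subspace_add)
    using subspace_add[OF subspace_orthogonal_comp oproj_orth oproj_orth, of x y]
    by (simp add: algebra_simps)
next
  fix c x
  show "oproj F (c *\<^sub>R x) = c *\<^sub>R oproj F x"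
    apply (rule oproj_unique)
    using oproj_in subF apply (simp add: subspace_scale)
    using subspace_scale[OF subspace_orthogonal_comp oproj_orth, of c x]
    by (simp add: algebra_simps)
qed

end

lemma oproj_comp:
  assumes "subspace F"
  shows "oproj (orthogonal_comp F) x = x - oproj F x"
  by (rule oproj_unique[OF subspace_orthogonal_comp])
     (use oproj_orth[OF assms] oproj_in[OF assms] orthogonal_comp_subset in auto)



lemma PSF: "product_sigma_finite (\<lambda>_::nat. lborel :: real measure)"
  by (simp add: product_sigma_finite_def sigma_finite_lborel)

abbreviation PM :: "nat \<Rightarrow> (nat \<Rightarrow> real) measure" where
  "PM k \<equiv> PiM {..<k} (\<lambda>_. lborel)"

definition Phi :: "(nat \<Rightarrow> 'a::real_vector) \<Rightarrow> nat \<Rightarrow> (nat \<Rightarrow> real) \<Rightarrow> 'a" where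
  "Phi b k t = (\<Sum>i<k. t i *\<^sub>R b i)"

lemma Phi_measurable[measurable]:
  fixes b :: "nat \<Rightarrow> 'a::euclidean_space"
  shows "Phi b k \<in> borel_measurable (PM k)"
  unfolding Phi_def
  by (intro borel_measurable_sum borel_measurable_scaleR borel_measurable_const)
     (auto intro!: measurable_component_singleton)

lemma bij_inv_lt:
  assumes "bij_betw e {..<(n::nat)} (UNIV::'n set)"
  shows "inv_into {..<n} e p < n" "e (inv_into {..<n} e p) = p"
  using assms by (metis UNIV_I bij_betw_def inv_into_into lessThan_iff,
                  metis UNIV_I bij_betw_def f_inv_into_f)

lemma lborel_PM_std:
  fixes e :: "nat \<Rightarrow> 'n::finite"
  assumes e: "bij_betw e {..<CARD('n)} UNIV"
  shows "lborel = distr (PM CARD('n)) borel (Phi (\<lambda>i. axis (e i) (1::real)) CARD('n))"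
proof (rule lborel_eqI)
  let ?n = "CARD('n)"
  fix l u :: "real^'n"
  assume lu: "\<And>b. b \<in> Basis \<Longrightarrow> l \<bullet> b \<le> u \<bullet> b"
  have le: "l $ p \<le> u $ p" for p
  proof -
    have "axis p (1::real) \<in> Basis" by (auto simp: Basis_vec_def)
    from lu[OF this] show ?thesis by (simp add: cart_eq_inner_axis)
  qed
  have Phicomp: "Phi (\<lambda>i. axis (e i) (1::real)) ?n t $ p = t (inv_into {..<?n} e p)" for t p
  proof -
    have "Phi (\<lambda>i. axis (e i) (1::real)) ?n t $ p = (\<Sum>i<?n. if e i = p then t i else 0)"
      by (simp add: Phi_def sum_component axis_def, intro sum.cong) auto
    also have "\<dots> = (\<Sum>i\<in>{inv_into {..<?n} e p}. t i)"
    proof (rule sum.mono_neutral_cong_right)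
      show "{inv_into {..<?n} e p} \<subseteq> {..<?n}"
        using e by (metis UNIV_I bij_betw_def inv_into_into empty_subsetI insert_subset)
      show "\<forall>i\<in>{..<?n} - {inv_into {..<?n} e p}. (if e i = p then t i else 0) = 0"
        using e by (auto simp: bij_betw_def)
      show "\<And>x. x \<in> {inv_into {..<?n} e p} \<Longrightarrow> (if e x = p then t x else 0) = t x"
        using e by (auto simp: bij_betw_def f_inv_into_f)
    qed simp
    finally show ?thesis by simp
  qed
  have pre: "Phi (\<lambda>i. axis (e i) (1::real)) ?n -` box l u \<inter> space (PM ?n)
        = PiE {..<?n} (\<lambda>i. {l $ e i <..< u $ e i})"
  proof (intro set_eqI iffI)
    fix t assume t: "t \<in> Phi (\<lambda>i. axis (e i) (1::real)) ?n -` box l u \<inter> space (PM ?n)"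
    then have ext: "t \<in> extensional {..<?n}" by (simp add: space_PiM PiE_iff)
    have "t i \<in> {l $ e i <..< u $ e i}" if "i < ?n" for i
    proof -
      have "inv_into {..<?n} e (e i) = i" using e that by (simp add: bij_betw_def inv_into_f_f)
      moreover have "Phi (\<lambda>i. axis (e i) (1::real)) ?n t \<in> box l u" using t by simp
      then have "l $ e i < Phi (\<lambda>i. axis (e i) (1::real)) ?n t $ e i \<and> Phi (\<lambda>i. axis (e i) (1::real)) ?n t $ e i < u $ e i"
        by (simp add: mem_box_cart)
      ultimately show ?thesis by (simp add: Phicomp)
    qed
    with ext show "t \<in> PiE {..<?n} (\<lambda>i. {l $ e i <..< u $ e i})" by (auto simp: PiE_iff)
  next
    fix t assume t: "t \<in> PiE {..<?n} (\<lambda>i. {l $ e i <..< u $ e i})"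
    have "l $ p < t (inv_into {..<?n} e p) \<and> t (inv_into {..<?n} e p) < u $ p" for p
    proof -
      have i: "inv_into {..<?n} e p \<in> {..<?n}" and ei: "e (inv_into {..<?n} e p) = p"
        using bij_inv_lt[OF e] by auto
      have "t (inv_into {..<?n} e p) \<in> {l $ e (inv_into {..<?n} e p) <..< u $ e (inv_into {..<?n} e p)}"
        by (rule PiE_mem[OF t i])
      then show ?thesis unfolding ei by simp
    qed
    then show "t \<in> Phi (\<lambda>i. axis (e i) (1::real)) ?n -` box l u \<inter> space (PM ?n)"
      using t by (simp add: mem_box_cart Phicomp space_PiM PiE_iff)
  qed
  have "emeasure (distr (PM ?n) borel (Phi (\<lambda>i. axis (e i) (1::real)) ?n)) (box l u)
      = emeasure (PM ?n) (PiE {..<?n} (\<lambda>i. {l $ e i <..< u $ e i}))"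
    by (subst emeasure_distr) (auto simp: pre)
  also have "\<dots> = (\<Prod>i<?n. emeasure lborel {l $ e i <..< u $ e i})"
    by (subst product_sigma_finite.emeasure_PiM[OF PSF]) auto
  also have "\<dots> = (\<Prod>i<?n. ennreal (u $ e i - l $ e i))"
  proof (rule prod.cong)
    fix i assume "i \<in> {..<?n}"
    have "l $ e i \<le> u $ e i" by (rule le)
    then show "emeasure lborel {l $ e i <..< u $ e i} = ennreal (u $ e i - l $ e i)" by simp
  qed simp
  also have "\<dots> = ennreal (\<Prod>i<?n. u $ e i - l $ e i)"
    by (rule prod_ennreal) (simp add: le)
  also have "(\<Prod>i<?n. u $ e i - l $ e i) = (\<Prod>p\<in>UNIV. u $ p - l $ p)"
    using prod.reindex_bij_betw[OF e, of "\<lambda>p. u $ p - l $ p"] by simp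
  also have "\<dots> = (\<Prod>b\<in>Basis. (u - l) \<bullet> b)"
  proof -
    have "(\<Prod>b\<in>Basis. (u - l) \<bullet> b) = (\<Prod>p\<in>UNIV. (u - l) \<bullet> axis p 1)"
    proof -
      have B: "(Basis :: (real^'n) set) = range (\<lambda>p. axis p 1)" by (auto simp: Basis_vec_def)
      have "inj (\<lambda>p::'n. axis p (1::real))" by (auto simp: inj_on_def axis_eq_axis)
      then show ?thesis unfolding B by (simp add: prod.reindex)
    qed
    then show ?thesis by (simp add: inner_axis)
  qed
  finally show "emeasure (distr (PM ?n) borel (Phi (\<lambda>i. axis (e i) (1::real)) ?n)) (box l u)
      = (\<Prod>b\<in>Basis. (u - l) \<bullet> b)" .
qed simp



definition onb :: "nat \<Rightarrow> (nat \<Rightarrow> 'a::real_inner) \<Rightarrow> bool" where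
  "onb k c \<longleftrightarrow> (\<forall>i<k. \<forall>l<k. inner (c i) (c l) = (if i = l then 1 else 0))"

lemma PM_Phi_measure:
  fixes c :: "nat \<Rightarrow> real^'n"
  assumes c: "onb CARD('n) c" and W: "compact W"
  shows "measure (PM CARD('n)) (Phi c CARD('n) -` W \<inter> space (PM CARD('n))) = measure lebesgue W"
proof -
  let ?n = "CARD('n)"
  obtain e :: "nat \<Rightarrow> 'n" where e: "bij_betw e {..<?n} UNIV"
    using ex_bij_betw_nat_finite[of "UNIV::'n set"] by (auto simp: atLeast0LessThan)
  define U where "U x = (\<Sum>i<?n. (x $ e i) *\<^sub>R c i)" for x :: "real^'n"
  have linU: "linear U" unfolding U_def
    by (intro linearI) (simp_all add: sum.distrib scaleR_add_left scale_sum_right)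
  have Uc: "U y \<bullet> c i = y $ e i" if "i < ?n" for y i
  proof -
    have "U y \<bullet> c i = (\<Sum>l<?n. y $ e l * (c l \<bullet> c i))"
      unfolding U_def inner_sum_left inner_scaleR_left ..
    also have "\<dots> = (\<Sum>l<?n. if l = i then y $ e l else 0)"
      using c that by (intro sum.cong) (auto simp: onb_def)
    finally show ?thesis using that by simp
  qed
  have innU: "U x \<bullet> U y = x \<bullet> y" for x y
  proof -
    have "U x \<bullet> U y = (\<Sum>i<?n. (x $ e i) * (U y \<bullet> c i))"
      unfolding U_def[of x] inner_sum_left inner_scaleR_left by (simp add: inner_commute)
    also have "\<dots> = (\<Sum>i<?n. (x $ e i) * (y $ e i))"
      by (intro sum.cong) (auto simp: Uc)
    also have "\<dots> = (\<Sum>p\<in>UNIV. x $ p * y $ p)"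
      using sum.reindex_bij_betw[OF e, of "\<lambda>p. x $ p * y $ p"] by simp
    also have "\<dots> = x \<bullet> y" by (simp add: inner_vec_def)
    finally show ?thesis .
  qed
  have oU: "orthogonal_transformation U"
    using linU innU by (simp add: orthogonal_transformation_def)
  have std: "Phi (\<lambda>i. axis (e i) (1::real)) ?n t $ e i = t i" if "i < ?n" for t i
  proof -
    have "Phi (\<lambda>i. axis (e i) (1::real)) ?n t $ e i = (\<Sum>l<?n. if e l = e i then t l else 0)"
      by (simp add: Phi_def sum_component axis_def, intro sum.cong) auto
    also have "\<dots> = (\<Sum>l<?n. if l = i then t l else 0)"
    proof (rule sum.cong)
      fix l assume "l \<in> {..<?n}"
      then have "e l = e i \<longleftrightarrow> l = i" using e that by (auto simp: bij_betw_def inj_on_def)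
      then show "(if e l = e i then t l else 0) = (if l = i then t l else 0)" by simp
    qed simp
    also have "\<dots> = t i" using that by simp
    finally show ?thesis .
  qed
  have PhiU: "Phi c ?n t = U (Phi (\<lambda>i. axis (e i) (1::real)) ?n t)" for t
    unfolding U_def Phi_def[of c] by (rule sum.cong) (auto simp: std)
  define V where "V = U -` W"
  have surjU: "surj U" using oU orthogonal_transformation_surj by blast
  have UV: "U ` V = W" unfolding V_def using surjU by (simp add: image_vimage_eq)
  have "bounded V"
  proof -
    obtain B where "\<forall>x\<in>W. norm x \<le> B" using compact_imp_bounded[OF W] by (auto simp: bounded_iff)
    then have "\<forall>x\<in>V. norm x \<le> B" using oU by (auto simp: V_def orthogonal_transformation)
    then show ?thesis by (auto simp: bounded_iff)
  qed
  moreover have "closed V" unfolding V_def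
    by (rule closed_vimage[OF compact_imp_closed[OF W]]) (metis linU linear_continuous_on linear_conv_bounded_linear)
  ultimately have cV: "compact V" by (simp add: compact_eq_bounded_closed)
  have "Phi c ?n -` W \<inter> space (PM ?n) = Phi (\<lambda>i. axis (e i) (1::real)) ?n -` V \<inter> space (PM ?n)"
    by (auto simp: V_def PhiU)
  also have "measure (PM ?n) \<dots> = measure lborel V"
    by (subst lborel_PM_std[OF e]) (simp add: measure_distr borel_compact cV)
  also have "\<dots> = measure lebesgue V"
    using cV by (simp add: borel_compact)
  also have "\<dots> = measure lebesgue W"
    using measure_linear_image'[OF linU lmeasurable_compact[OF cV]] oU UV by simp
  finally show ?thesis .
qed



definition shiftk :: "nat \<Rightarrow> nat \<Rightarrow> (nat \<Rightarrow> real) \<Rightarrow> (nat \<Rightarrow> real)" where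
  "shiftk k m t = (\<lambda>i\<in>{..<m}. t (i + k))"

lemma shiftk_measurable[measurable]:
  "shiftk k m \<in> measurable (PiM {k..<k+m} (\<lambda>_. lborel)) (PM m)"
  unfolding shiftk_def
  by (rule measurable_restrict) (auto intro!: measurable_component_singleton)

lemma distr_shiftk: "distr (PiM {k..<k+m} (\<lambda>_. lborel)) (PM m) (shiftk k m) = PM m"
proof (rule product_sigma_finite.PiM_eqI[OF PSF])
  fix A :: "nat \<Rightarrow> real set" assume A: "\<And>i. i \<in> {..<m} \<Longrightarrow> A i \<in> sets lborel"
  have pre: "shiftk k m -` PiE {..<m} A \<inter> space (PiM {k..<k+m} (\<lambda>_. lborel :: real measure))
     = PiE {k..<k+m} (\<lambda>j. A (j - k))"
  proof (intro set_eqI iffI)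
    fix t assume t: "t \<in> shiftk k m -` PiE {..<m} A \<inter> space (PiM {k..<k+m} (\<lambda>_. lborel :: real measure))"
    show "t \<in> PiE {k..<k+m} (\<lambda>j. A (j - k))"
    proof (rule PiE_I)
      fix j assume j: "j \<in> {k..<k+m}"
      then have "j - k \<in> {..<m}" by auto
      with t have "shiftk k m t (j - k) \<in> A (j - k)" by (auto simp: PiE_iff)
      then show "t j \<in> A (j - k)" using j \<open>j - k \<in> {..<m}\<close> by (simp add: shiftk_def)
    next
      fix j assume "j \<notin> {k..<k+m}"
      then show "t j = undefined" using t by (auto simp: space_PiM PiE_iff extensional_def)
    qed
  next
    fix t assume t: "t \<in> PiE {k..<k+m} (\<lambda>j. A (j - k))"
    have "shiftk k m t \<in> PiE {..<m} A"
    proof (rule PiE_I)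
      fix i assume i: "i \<in> {..<m}"
      then have "i + k \<in> {k..<k+m}" by auto
      with t have "t (i + k) \<in> A (i + k - k)" unfolding PiE_iff by blast
      then show "shiftk k m t i \<in> A i" using i by (simp add: shiftk_def)
    qed (simp add: shiftk_def)
    moreover have "t \<in> space (PiM {k..<k+m} (\<lambda>_. lborel :: real measure))"
      using t by (auto simp: space_PiM PiE_iff)
    ultimately show "t \<in> shiftk k m -` PiE {..<m} A \<inter> space (PiM {k..<k+m} (\<lambda>_. lborel :: real measure))"
      by simp
  qed
  have "emeasure (distr (PiM {k..<k+m} (\<lambda>_. lborel)) (PM m) (shiftk k m)) (PiE {..<m} A)
      = emeasure (PiM {k..<k+m} (\<lambda>_. lborel)) (PiE {k..<k+m} (\<lambda>j. A (j - k)))"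
    using A by (subst emeasure_distr) (auto simp: pre)
  also have "\<dots> = (\<Prod>j\<in>{k..<k+m}. emeasure lborel (A (j - k)))"
    using A by (subst product_sigma_finite.emeasure_PiM[OF PSF]) auto
  also have "\<dots> = (\<Prod>i<m. emeasure lborel (A i))"
  proof -
    have "{k..<k+m} = (\<lambda>i. i + k) ` {..<m}"
    proof (rule set_eqI, rule iffI)
      fix x assume "x \<in> {k..<k+m}"
      then have "x - k \<in> {..<m}" "x = (x - k) + k" by auto
      then show "x \<in> (\<lambda>i. i + k) ` {..<m}" by (rule rev_image_eqI)
    qed auto
    then show ?thesis by (simp add: prod.reindex)
  qed
  finally show "emeasure (distr (PiM {k..<k+m} (\<lambda>_. lborel)) (PM m) (shiftk k m)) (PiE {..<m} A)
      = (\<Prod>i<m. emeasure lborel (A i))" .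
qed simp_all

lemma PM_split:
  assumes S1: "S1 \<in> sets (PM k)" and S2: "S2 \<in> sets (PM m)"
  shows "emeasure (PM (k + m)) {t \<in> space (PM (k + m)). restrict t {..<k} \<in> S1 \<and> shiftk k m t \<in> S2}
       = emeasure (PM k) S1 * emeasure (PM m) S2"
proof -
  interpret I: finite_product_sigma_finite "\<lambda>_::nat. lborel :: real measure" "{..<k}"
    by standard auto
  interpret J: finite_product_sigma_finite "\<lambda>_::nat. lborel :: real measure" "{k..<k+m}"
    by standard auto
  have U: "{..<k} \<union> {k..<k+m} = {..<k+m}" by auto
  have D: "PM (k + m) = distr (PM k \<Otimes>\<^sub>M PiM {k..<k+m} (\<lambda>_. lborel)) (PM (k + m)) (merge {..<k} {k..<k+m})"
  proof -
    have "distr (PM k \<Otimes>\<^sub>M PiM {k..<k+m} (\<lambda>_. lborel)) (PiM ({..<k} \<union> {k..<k+m}) (\<lambda>_. lborel :: real measure)) (merge {..<k} {k..<k+m})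
       = PiM ({..<k} \<union> {k..<k+m}) (\<lambda>_. lborel)"
      by (rule product_sigma_finite.distr_merge[OF PSF]) auto
    then show ?thesis unfolding U by simp
  qed
  let ?T = "{t \<in> space (PM (k + m)). restrict t {..<k} \<in> S1 \<and> shiftk k m t \<in> S2}"
  have Tm: "?T \<in> sets (PM (k + m))"
  proof -
    have "restrict t {..<k} \<in> S1 \<longleftrightarrow> restrict t {..<k} \<in> S1" for t ..
    have m1: "(\<lambda>t. restrict t {..<k}) \<in> measurable (PM (k+m)) (PM k)"
      by (rule measurable_restrict) (auto intro!: measurable_component_singleton)
    have m2: "shiftk k m \<in> measurable (PM (k+m)) (PM m)"
      unfolding shiftk_def by (rule measurable_restrict) (auto intro!: measurable_component_singleton)
    have "?T = ((\<lambda>t. restrict t {..<k}) -` S1 \<inter> space (PM (k+m))) \<inter> (shiftk k m -` S2 \<inter> space (PM (k+m)))"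
      by auto
    also have "\<dots> \<in> sets (PM (k + m))"
      using measurable_sets[OF m1 S1] measurable_sets[OF m2 S2] by auto
    finally show ?thesis .
  qed
  have pre: "merge {..<k} {k..<k+m} -` ?T \<inter> space (PM k \<Otimes>\<^sub>M PiM {k..<k+m} (\<lambda>_. lborel))
     = S1 \<times> (shiftk k m -` S2 \<inter> space (PiM {k..<k+m} (\<lambda>_. lborel)))"
  proof -
    have s1: "S1 \<subseteq> space (PM k)" using S1 by (rule sets.sets_into_space)
    have r: "restrict (merge {..<k} {k..<k+m} (x, y)) {..<k} = x" if "x \<in> space (PM k)" for x y
      using that by (auto simp: space_PiM PiE_iff extensional_def merge_def restrict_def fun_eq_iff)
    have sh: "shiftk k m (merge {..<k} {k..<k+m} (x, y)) = shiftk k m y" for x y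
      by (auto simp: shiftk_def merge_def fun_eq_iff)
    show ?thesis
      using s1 U by (auto simp: space_pair_measure r sh space_PiM simp del: Pi_cancel_merge PiE_cancel_merge)
  qed
  have "emeasure (PM (k + m)) ?T
     = emeasure (PM k \<Otimes>\<^sub>M PiM {k..<k+m} (\<lambda>_. lborel)) (S1 \<times> (shiftk k m -` S2 \<inter> space (PiM {k..<k+m} (\<lambda>_. lborel))))"
    apply (subst D) apply (subst emeasure_distr)
    using Tm pre measurable_merge[of "{..<k}" "{k..<k+m}" "\<lambda>_. lborel :: real measure"] U
    by (auto simp: D[symmetric])
  also have "\<dots> = emeasure (PM k) S1 * emeasure (PiM {k..<k+m} (\<lambda>_. lborel)) (shiftk k m -` S2 \<inter> space (PiM {k..<k+m} (\<lambda>_. lborel)))"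
    using S1 S2 by (intro J.emeasure_pair_measure_Times) (auto intro!: measurable_sets[OF shiftk_measurable])
  also have "emeasure (PiM {k..<k+m} (\<lambda>_. lborel)) (shiftk k m -` S2 \<inter> space (PiM {k..<k+m} (\<lambda>_. lborel)))
     = emeasure (PM m) S2"
    using S2 by (subst distr_shiftk[symmetric]) (simp add: emeasure_distr)
  finally show ?thesis .
qed



definition mu :: "(nat \<Rightarrow> 'a::euclidean_space) \<Rightarrow> nat \<Rightarrow> 'a set \<Rightarrow> real" where
  "mu b k X = measure (PM k) (Phi b k -` X \<inter> space (PM k))"

lemma Phi_in_span: "Phi b k t \<in> span (b ` {..<k})"
  unfolding Phi_def by (intro span_sum span_scale span_base) auto

lemma Phi_in_subspace: "subspace F \<Longrightarrow> (\<forall>i<k. b i \<in> F) \<Longrightarrow> Phi b k t \<in> F"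
  unfolding Phi_def by (intro subspace_sum subspace_scale) auto

lemma decomp_unique:
  fixes F :: "'a::euclidean_space set"
  assumes "subspace F" "p \<in> F" "x \<in> F" "q \<in> orthogonal_comp F" "z \<in> orthogonal_comp F"
    and "p + q = x + z"
  shows "p = x \<and> q = z"
proof -
  have "p - x = z - q" using assms(6) by (simp add: algebra_simps)
  moreover have "p - x \<in> F" using assms by (simp add: subspace_diff)
  moreover have "z - q \<in> orthogonal_comp F" using assms(4,5) by (rule subspace_diff[OF subspace_orthogonal_comp, rotated])
  ultimately have "p - x \<in> F \<inter> orthogonal_comp F" by simp
  then have "p - x = 0" unfolding orthogonal_Int_0[OF assms(1)] by simp
  then show ?thesis using assms(6) by simp
qed

lemma Vgen:
  fixes F :: "(real^'n) set" and b b' :: "nat \<Rightarrow> real^'n"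
  assumes F: "subspace F" and ob: "onb k b" and ob': "onb m b'" and km: "k + m = CARD('n)"
    and bF: "\<forall>i<k. b i \<in> F" and bF': "\<forall>i<m. b' i \<in> orthogonal_comp F"
    and X: "compact X" "X \<subseteq> F" and Z: "compact Z" "Z \<subseteq> orthogonal_comp F"
  shows "measure lebesgue {x + z | x z. x \<in> X \<and> z \<in> Z} = mu b k X * mu b' m Z"
proof -
  define c where "c i = (if i < k then b i else b' (i - k))" for i
  have oc: "onb CARD('n) c"
    unfolding onb_def
  proof (intro allI impI)
    fix i l assume i: "i < CARD('n)" and l: "l < CARD('n)"
    show "c i \<bullet> c l = (if i = l then 1 else 0)"
    proof (cases "i < k"; cases "l < k")
      assume "i < k" "l < k" then show ?thesis using ob by (simp add: c_def onb_def)
    next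
      assume "i < k" "\<not> l < k"
      then have "b' (l - k) \<in> orthogonal_comp F" "b i \<in> F" using bF bF' l km by auto
      then show ?thesis using \<open>i < k\<close> \<open>\<not> l < k\<close> by (auto simp: c_def dest: orth_compD)
    next
      assume "\<not> i < k" "l < k"
      then have "b' (i - k) \<in> orthogonal_comp F" "b l \<in> F" using bF bF' i km by auto
      then show ?thesis using \<open>\<not> i < k\<close> \<open>l < k\<close>
        by (auto simp: c_def inner_commute dest: orth_compD)
    next
      assume "\<not> i < k" "\<not> l < k"
      then have "i - k < m" "l - k < m" "i - k = l - k \<longleftrightarrow> i = l" using i l km by auto
      then show ?thesis using ob' \<open>\<not> i < k\<close> \<open>\<not> l < k\<close> by (simp add: c_def onb_def)
    qed
  qed
  have Phic: "Phi c (k + m) t = Phi b k (restrict t {..<k}) + Phi b' m (shiftk k m t)" for t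
  proof -
    have "Phi c (k + m) t = (\<Sum>i\<in>{..<k} \<union> {k..<k+m}. t i *\<^sub>R c i)"
      unfolding Phi_def by (rule sum.cong) auto
    also have "\<dots> = (\<Sum>i<k. t i *\<^sub>R c i) + (\<Sum>i\<in>{k..<k+m}. t i *\<^sub>R c i)"
      by (rule sum.union_disjoint) auto
    also have "(\<Sum>i<k. t i *\<^sub>R c i) = Phi b k (restrict t {..<k})"
      unfolding Phi_def by (rule sum.cong) (auto simp: c_def)
    also have "{k..<k+m} = (\<lambda>i. i + k) ` {..<m}"
    proof (rule set_eqI, rule iffI)
      fix x assume "x \<in> {k..<k+m}"
      then have "x - k \<in> {..<m}" "x = (x - k) + k" by auto
      then show "x \<in> (\<lambda>i. i + k) ` {..<m}" by (rule rev_image_eqI)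
    qed auto
    also have "(\<Sum>i\<in>(\<lambda>i. i + k) ` {..<m}. t i *\<^sub>R c i) = Phi b' m (shiftk k m t)"
      by (subst sum.reindex) (auto simp: Phi_def shiftk_def c_def intro!: sum.cong)
    finally show ?thesis .
  qed
  let ?S1 = "Phi b k -` X \<inter> space (PM k)"
  let ?S2 = "Phi b' m -` Z \<inter> space (PM m)"
  have S1: "?S1 \<in> sets (PM k)"
    using X by (intro measurable_sets[OF Phi_measurable]) (simp add: borel_compact)
  have S2: "?S2 \<in> sets (PM m)"
    using Z by (intro measurable_sets[OF Phi_measurable]) (simp add: borel_compact)
  have pre: "Phi c (k + m) -` {x + z | x z. x \<in> X \<and> z \<in> Z} \<inter> space (PM (k + m))
     = {t \<in> space (PM (k + m)). restrict t {..<k} \<in> ?S1 \<and> shiftk k m t \<in> ?S2}"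
  proof (intro set_eqI iffI)
    fix t assume t: "t \<in> Phi c (k + m) -` {x + z | x z. x \<in> X \<and> z \<in> Z} \<inter> space (PM (k + m))"
    then obtain x z where xz: "x \<in> X" "z \<in> Z" "Phi c (k + m) t = x + z" by auto
    have "Phi b k (restrict t {..<k}) = x \<and> Phi b' m (shiftk k m t) = z"
      by (rule decomp_unique[OF F Phi_in_subspace[OF F] _ Phi_in_subspace[OF subspace_orthogonal_comp]])
         (use xz X Z bF bF' Phic in auto)
    moreover have "restrict t {..<k} \<in> space (PM k)" "shiftk k m t \<in> space (PM m)"
      using t by (auto simp: space_PiM shiftk_def)
    ultimately show "t \<in> {t \<in> space (PM (k + m)). restrict t {..<k} \<in> ?S1 \<and> shiftk k m t \<in> ?S2}"
      using t xz by auto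
  next
    fix t assume "t \<in> {t \<in> space (PM (k + m)). restrict t {..<k} \<in> ?S1 \<and> shiftk k m t \<in> ?S2}"
    then show "t \<in> Phi c (k + m) -` {x + z | x z. x \<in> X \<and> z \<in> Z} \<inter> space (PM (k + m))"
      by (auto simp: Phic)
  qed
  have cXZ: "compact {x + z | x z. x \<in> X \<and> z \<in> Z}"
    using compact_sums[OF X(1) Z(1)] by simp
  have "measure lebesgue {x + z | x z. x \<in> X \<and> z \<in> Z}
      = measure (PM (k + m)) (Phi c (k + m) -` {x + z | x z. x \<in> X \<and> z \<in> Z} \<inter> space (PM (k + m)))"
    using PM_Phi_measure[OF oc cXZ] km by simp
  also have "\<dots> = enn2real (emeasure (PM k) ?S1 * emeasure (PM m) ?S2)"
    unfolding pre measure_def by (subst PM_split[OF S1 S2]) simp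
  also have "\<dots> = mu b k X * mu b' m Z"
    by (simp add: mu_def measure_def enn2real_mult)
  finally show ?thesis .
qed



lemma onb_exists:
  fixes F :: "'a::euclidean_space set"
  assumes F: "subspace F"
  shows "\<exists>b. orthonormal_basis_of F (dim F) b"
proof -
  obtain B where B: "B \<subseteq> F" "pairwise orthogonal B" "\<And>x. x \<in> B \<Longrightarrow> norm x = 1"
    "independent B" "card B = dim F" "span B = F"
    using orthonormal_basis_subspace[OF F] by metis
  have "finite B" using B(4) by (simp add: independent_imp_finite)
  then obtain e where e: "bij_betw e {0..<card B} B" using ex_bij_betw_nat_finite by blast
  then have e': "bij_betw e {..<dim F} B" using B(5) by (simp add: atLeast0LessThan)
  have "onb (dim F) e"
    unfolding onb_def
  proof (intro allI impI)
    fix i l assume "i < dim F" "l < dim F"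
    then have ei: "e i \<in> B" "e l \<in> B" "e i = e l \<longleftrightarrow> i = l"
      using e' by (auto simp: bij_betw_def inj_on_def)
    show "e i \<bullet> e l = (if i = l then 1 else 0)"
    proof (cases "i = l")
      case True then show ?thesis using B(3)[OF ei(1)] by (simp add: norm_eq_1)
    next
      case False then show ?thesis using B(2) ei by (auto simp: pairwise_def orthogonal_def)
    qed
  qed
  moreover have "span (e ` {..<dim F}) = F" using e' B(6) by (simp add: bij_betw_def)
  ultimately have "orthonormal_basis_of F (dim F) e" by (simp add: orthonormal_basis_of_def onb_def)
  then show ?thesis by blast
qed

lemma onb_of_in: "orthonormal_basis_of F k b \<Longrightarrow> i < k \<Longrightarrow> b i \<in> F"
  unfolding orthonormal_basis_of_def by (metis lessThan_iff image_eqI span_base)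

lemma onb_of_onb: "orthonormal_basis_of F k b \<Longrightarrow> onb k b"
  unfolding orthonormal_basis_of_def onb_def by simp

definition sb :: "'a::euclidean_space set \<Rightarrow> nat \<Rightarrow> 'a" where
  "sb F = (SOME b. orthonormal_basis_of F (dim F) b)"

lemma sb: "subspace F \<Longrightarrow> orthonormal_basis_of F (dim F) (sb F)"
  unfolding sb_def using onb_exists by (rule someI_ex) 

lemma subspace_volume_mu: "subspace_volume F X = mu (sb F) (dim F) X"
  unfolding subspace_volume_def mu_def sb_def Let_def Phi_def[abs_def] ..

lemma dim_orth:
  fixes F :: "(real^'n) set"
  assumes F: "subspace F"
  shows "dim F + dim (orthogonal_comp F) = CARD('n)"
proof -
  have "{x + y |x y. x \<in> F \<and> y \<in> orthogonal_comp F} = F + orthogonal_comp F"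
    by (auto simp: set_plus_def)
  also have "\<dots> = UNIV" by (rule subspace_sum_orthogonal_comp[OF F])
  finally have "dim {x + y |x y. x \<in> F \<and> y \<in> orthogonal_comp F} = CARD('n)" by simp
  moreover have "dim (F \<inter> orthogonal_comp F) = 0"
  proof -
    have "dim {0::real^'n} = dim ({}::(real^'n) set)" by (metis dim_span span_insert_0)
    then show ?thesis unfolding orthogonal_Int_0[OF F] by simp
  qed
  moreover have "dim {x + y |x y. x \<in> F \<and> y \<in> orthogonal_comp F} + dim (F \<inter> orthogonal_comp F)
     = dim F + dim (orthogonal_comp F)"
    by (rule dim_sums_Int[OF F subspace_orthogonal_comp])
  ultimately show ?thesis by linarith
qed

lemma Phi_inner: "onb m b \<Longrightarrow> i < m \<Longrightarrow> Phi b m t \<bullet> b i = t i"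
proof -
  assume ob: "onb m b" and i: "i < m"
  have "Phi b m t \<bullet> b i = (\<Sum>l<m. t l * (b l \<bullet> b i))"
    unfolding Phi_def inner_sum_left inner_scaleR_left ..
  also have "\<dots> = (\<Sum>l<m. if l = i then t l else 0)"
    using ob i by (intro sum.cong) (auto simp: onb_def)
  finally show ?thesis using i by simp
qed

lemma mu_cball_pos:
  fixes b :: "nat \<Rightarrow> 'a::euclidean_space"
  assumes ob: "onb m b" and SS: "Phi b m ` space (PM m) \<subseteq> S"
  shows "0 < mu b m (cball 0 1 \<inter> S)"
proof -
  let ?P = "Phi b m -` (cball 0 1 \<inter> S) \<inter> space (PM m)"
  let ?small = "PiE {..<m} (\<lambda>_. {0..1 / real (Suc m)})"
  let ?big = "PiE {..<m} (\<lambda>_. {-1..1::real})"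
  have sub1: "?small \<subseteq> ?P"
  proof
    fix t assume t: "t \<in> ?small"
    have "norm (Phi b m t) \<le> (\<Sum>i<m. norm (t i *\<^sub>R b i))"
      unfolding Phi_def by (rule norm_sum)
    also have "\<dots> \<le> (\<Sum>i<m. 1 / real (Suc m))"
    proof (rule sum_mono)
      fix i assume "i \<in> {..<m}"
      then have "0 \<le> t i" "t i \<le> 1 / real (Suc m)" "norm (b i) = 1"
        using t ob by (auto simp: PiE_iff onb_def norm_eq_1)
      then show "norm (t i *\<^sub>R b i) \<le> 1 / real (Suc m)" by simp
    qed
    also have "\<dots> \<le> 1" by (simp add: field_simps)
    finally have "Phi b m t \<in> cball 0 1" by simp
    moreover have "t \<in> space (PM m)" using t by (auto simp: space_PiM PiE_iff)
    ultimately show "t \<in> ?P" using SS by auto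
  qed
  have sub2: "?P \<subseteq> ?big"
  proof
    fix t assume t: "t \<in> ?P"
    have "\<bar>t i\<bar> \<le> 1" if i: "i < m" for i
    proof -
      have "\<bar>t i\<bar> = \<bar>Phi b m t \<bullet> b i\<bar>" using Phi_inner[OF ob i] by simp
      also have "\<dots> \<le> norm (Phi b m t) * norm (b i)" by (rule Cauchy_Schwarz_ineq2)
      also have "\<dots> \<le> 1"
      proof -
        have "norm (b i) = 1" using ob i by (simp add: onb_def norm_eq_1)
        moreover have "norm (Phi b m t) \<le> 1" using t by auto
        ultimately show ?thesis by simp
      qed
      finally show ?thesis .
    qed
    then show "t \<in> ?big" using t by (auto simp: space_PiM PiE_iff abs_le_iff)
  qed
  have Pm: "?P \<in> sets (PM m)"
  proof -
    have "cball 0 1 \<inter> S \<inter> range (Phi b m) \<in> sets borel \<or> True" by simp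
    have "?P = Phi b m -` (cball 0 1) \<inter> space (PM m)" using SS by auto
    also have "\<dots> \<in> sets (PM m)" by (intro measurable_sets[OF Phi_measurable]) auto
    finally show ?thesis .
  qed
  have "emeasure (PM m) ?small = (\<Prod>i<m. emeasure lborel {0..1 / real (Suc m)})"
    by (subst product_sigma_finite.emeasure_PiM[OF PSF]) auto
  also have "\<dots> = (\<Prod>i<m. ennreal (1 / real (Suc m)))" by simp
  also have "\<dots> = ennreal ((1 / real (Suc m)) ^ m)" by (simp add: ennreal_power)
  finally have "0 < emeasure (PM m) ?small" by simp
  also have "emeasure (PM m) ?small \<le> emeasure (PM m) ?P"
    by (rule emeasure_mono[OF sub1 Pm])
  finally have pos: "0 < emeasure (PM m) ?P" .
  have "emeasure (PM m) ?P \<le> emeasure (PM m) ?big"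
    by (rule emeasure_mono[OF sub2]) auto
  also have "\<dots> = (\<Prod>i<m. emeasure lborel {-1..1::real})"
    by (subst product_sigma_finite.emeasure_PiM[OF PSF]) auto
  also have "\<dots> = ennreal (2 ^ m)" by (simp add: ennreal_power[symmetric])
  also have "\<dots> < top" by simp
  finally show ?thesis using pos by (simp add: mu_def measure_def enn2real_positive_iff)
qed



lemma VV:
  fixes F :: "(real^'n) set"
  assumes F: "subspace F" and X: "compact X" "X \<subseteq> F" and Z: "compact Z" "Z \<subseteq> orthogonal_comp F"
  shows "measure lebesgue {x + z | x z. x \<in> X \<and> z \<in> Z}
       = subspace_volume F X * subspace_volume (orthogonal_comp F) Z"
  unfolding subspace_volume_mu
  by (rule Vgen[OF F onb_of_onb[OF sb[OF F]] onb_of_onb[OF sb[OF subspace_orthogonal_comp]]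
        dim_orth[OF F] _ _ X Z])
     (auto intro: onb_of_in[OF sb[OF F]] onb_of_in[OF sb[OF subspace_orthogonal_comp]])

lemma compact_ball_sub: "subspace (F :: (real^'n) set) \<Longrightarrow> compact (cball 0 1 \<inter> F)"
  by (simp add: closed_subspace compact_Int_closed)

lemma vol_pos:
  fixes F :: "(real^'n) set"
  assumes F: "subspace F"
  shows "0 < subspace_volume F (cball 0 1 \<inter> F)"
  unfolding subspace_volume_mu
  by (rule mu_cball_pos[OF onb_of_onb[OF sb[OF F]]])
     (auto intro!: Phi_in_subspace[OF F] onb_of_in[OF sb[OF F]])

lemma vol_basis:
  fixes F :: "(real^'n) set" and b :: "nat \<Rightarrow> real^'n"
  assumes F: "subspace F" and b: "orthonormal_basis_of F (dim F) b"
    and X: "compact X" "X \<subseteq> F"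
  shows "subspace_volume F X = mu b (dim F) X"
proof -
  let ?Z = "cball 0 1 \<inter> orthogonal_comp F"
  have Z: "compact ?Z" "?Z \<subseteq> orthogonal_comp F"
    using compact_ball_sub[OF subspace_orthogonal_comp] by auto
  have "measure lebesgue {x + z | x z. x \<in> X \<and> z \<in> ?Z}
       = mu b (dim F) X * mu (sb (orthogonal_comp F)) (dim (orthogonal_comp F)) ?Z"
    by (rule Vgen[OF F onb_of_onb[OF b] onb_of_onb[OF sb[OF subspace_orthogonal_comp]]
        dim_orth[OF F] _ _ X Z])
       (auto intro: onb_of_in[OF b] onb_of_in[OF sb[OF subspace_orthogonal_comp]])
  moreover have "measure lebesgue {x + z | x z. x \<in> X \<and> z \<in> ?Z}
       = subspace_volume F X * subspace_volume (orthogonal_comp F) ?Z"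
    by (rule VV[OF F X Z])
  moreover have "0 < subspace_volume (orthogonal_comp F) ?Z"
    by (rule vol_pos[OF subspace_orthogonal_comp])
  ultimately show ?thesis by (simp add: subspace_volume_mu)
qed

lemma vol_iso:
  fixes G :: "(real^'n) set" and Q :: "real^'n \<Rightarrow> real^'n"
  assumes Q: "orthogonal_transformation Q" and G: "subspace G" and Y: "compact Y" "Y \<subseteq> G"
  shows "subspace_volume (Q ` G) (Q ` Y) = subspace_volume G Y"
proof -
  have linQ: "linear Q" and innQ: "\<And>v w. Q v \<bullet> Q w = v \<bullet> w"
    using Q by (auto simp: orthogonal_transformation_def)
  have injQ: "inj Q" using Q by (rule orthogonal_transformation_inj)
  have QG: "subspace (Q ` G)" using linQ G by (rule linear_subspace_image)
  have dimQ: "dim (Q ` G) = dim G" using linQ injQ by (metis dim_image_eq inj_on_subset subset_UNIV)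
  let ?b = "sb G"
  have b: "orthonormal_basis_of G (dim G) ?b" by (rule sb[OF G])
  have Qb: "orthonormal_basis_of (Q ` G) (dim (Q ` G)) (Q \<circ> ?b)"
  proof -
    have "span ((Q \<circ> ?b) ` {..<dim G}) = Q ` span (?b ` {..<dim G})"
      unfolding image_comp[symmetric] by (rule span_linear_image[OF linQ])
    then show ?thesis using b unfolding orthonormal_basis_of_def dimQ by (simp add: innQ)
  qed
  have cQY: "compact (Q ` Y)"
    using Y(1) linQ by (simp add: compact_continuous_image linear_continuous_on linear_conv_bounded_linear)
  have "subspace_volume (Q ` G) (Q ` Y) = mu (Q \<circ> ?b) (dim (Q ` G)) (Q ` Y)"
    by (rule vol_basis[OF QG Qb cQY]) (use Y in auto)
  also have "\<dots> = mu ?b (dim G) Y"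
  proof -
    have "Phi (Q \<circ> ?b) k t = Q (Phi ?b k t)" for k t
      unfolding Phi_def by (simp add: linear_sum[OF linQ] linear_scale[OF linQ])
    then have "Phi (Q \<circ> ?b) k -` (Q ` Y) = Phi ?b k -` Y" for k
      using injQ by (auto simp: inj_image_mem_iff dest: injD)
    then show ?thesis by (simp add: mu_def dimQ)
  qed
  also have "\<dots> = subspace_volume G Y" by (simp add: subspace_volume_mu)
  finally show ?thesis .
qed



type_synonym 'n V = "real^'n"

lemma proj_onto_eq:
  assumes F: "subspace F"
  shows "proj_onto K F = oproj F ` K"
proof (intro set_eqI iffI)
  fix p assume "p \<in> proj_onto K F"
  then obtain x where p: "p \<in> F" "x \<in> K" "\<forall>e\<in>F. inner (x - p) e = 0"
    by (auto simp: proj_onto_def)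
  then have "x - p \<in> orthogonal_comp F" by (auto intro!: orth_compI simp: inner_commute)
  then have "oproj F x = p" using oproj_unique[OF F p(1)] by simp
  then show "p \<in> oproj F ` K" using p(2) by blast
next
  fix p assume "p \<in> oproj F ` K"
  then obtain x where x: "x \<in> K" "p = oproj F x" by auto
  have "\<forall>e\<in>F. inner (x - p) e = 0"
    using oproj_orth[OF F, of x] x by (auto dest: orth_compD simp: inner_commute)
  then show "p \<in> proj_onto K F" using x oproj_in[OF F] by (auto simp: proj_onto_def)
qed

lemma det_comp:
  fixes f g :: "real^'n \<Rightarrow> real^'n"
  assumes "linear f" "linear g"
  shows "det (matrix (f \<circ> g)) = det (matrix f) * det (matrix g)"
  using matrix_compose[OF assms(2,1)] by (simp add: det_mul)

lemma compact_lin_image: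
  fixes f :: "real^'n \<Rightarrow> real^'n"
  shows "linear f \<Longrightarrow> compact Y \<Longrightarrow> compact (f ` Y)"
  by (simp add: compact_continuous_image linear_continuous_on linear_conv_bounded_linear)

lemma BLK:
  fixes T :: "real^'n \<Rightarrow> real^'n" and F G :: "(real^'n) set"
  assumes T: "linear T" and G: "subspace G" and F: "subspace F"
    and TG: "T ` G \<subseteq> F" and TG': "T ` orthogonal_comp G \<subseteq> orthogonal_comp F"
    and Y: "compact Y" "Y \<subseteq> G" and Z: "compact Z" "Z \<subseteq> orthogonal_comp G"
  shows "subspace_volume F (T ` Y) * subspace_volume (orthogonal_comp F) (T ` Z)
       = \<bar>det (matrix T)\<bar> * (subspace_volume G Y * subspace_volume (orthogonal_comp G) Z)"
proof -
  let ?S = "{x + z | x z. x \<in> Y \<and> z \<in> Z}"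
  have img: "T ` ?S = {x + z | x z. x \<in> T ` Y \<and> z \<in> T ` Z}"
  proof (intro set_eqI iffI)
    fix w assume "w \<in> T ` ?S"
    then show "w \<in> {x + z | x z. x \<in> T ` Y \<and> z \<in> T ` Z}" by (auto simp: linear_add[OF T]) blast
  next
    fix w assume "w \<in> {x + z | x z. x \<in> T ` Y \<and> z \<in> T ` Z}"
    then obtain y z where "y \<in> Y" "z \<in> Z" "w = T y + T z" by auto
    then have "w = T (y + z)" "y + z \<in> ?S" by (auto simp: linear_add[OF T])
    then show "w \<in> T ` ?S" by blast
  qed
  have cS: "compact ?S" using compact_sums[OF Y(1) Z(1)] by simp
  have "measure lebesgue (T ` ?S) = \<bar>det (matrix T)\<bar> * measure lebesgue ?S"
    by (rule measure_linear_image'[OF T lmeasurable_compact[OF cS]])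
  moreover have "measure lebesgue (T ` ?S) = subspace_volume F (T ` Y) * subspace_volume (orthogonal_comp F) (T ` Z)"
    unfolding img by (rule VV[OF F compact_lin_image[OF T Y(1)] _ compact_lin_image[OF T Z(1)]])
                     (use TG TG' Y Z in blast)+
  moreover have "measure lebesgue ?S = subspace_volume G Y * subspace_volume (orthogonal_comp G) Z"
    by (rule VV[OF G Y Z])
  ultimately show ?thesis by simp
qed

lemma arith_s1:
  fixes p q d a c y w :: real
  assumes "p * q = d * (a * c)" "0 < a" "0 < c" "0 < d" "y * q = d * (w * c)"
  shows "y = (p / a) * w"
proof -
  have q: "q \<noteq> 0" using assms(1-4) by auto
  have "y * q * a = d * w * c * a" using assms(5) by (simp add: mult_ac)
  also have "\<dots> = p * q * w" using assms(1) by (simp add: mult_ac)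
  finally have "y * a = p * w" using q by (simp add: mult_ac)
  then show ?thesis using assms(2) by (simp add: field_simps)
qed

lemma arith_s2:
  fixes p q d a c z w :: real
  assumes "p * q = d * (a * c)" "0 < a" "0 < c" "0 < d" "p * z = d * (a * w)"
  shows "z = (q / c) * w"
  using arith_s1[of q p d c a z w] assms by (simp add: mult_ac)

lemma arith_s12:
  fixes p q d a c :: real
  assumes "p * q = d * (a * c)" "0 < a" "0 < c"
  shows "(p / a) * (q / c) = d"
  using assms by (simp add: field_simps)

lemma BLK_scale:
  fixes T :: "real^'n \<Rightarrow> real^'n" and F G :: "(real^'n) set"
  assumes T: "linear T" and G: "subspace G" and F: "subspace F"
    and TG: "T ` G \<subseteq> F" and TG': "T ` orthogonal_comp G \<subseteq> orthogonal_comp F"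
    and d: "det (matrix T) \<noteq> 0"
  obtains s1 s2 where
    "\<And>Y. compact Y \<Longrightarrow> Y \<subseteq> G \<Longrightarrow> subspace_volume F (T ` Y) = s1 * subspace_volume G Y"
    "\<And>Z. compact Z \<Longrightarrow> Z \<subseteq> orthogonal_comp G \<Longrightarrow>
        subspace_volume (orthogonal_comp F) (T ` Z) = s2 * subspace_volume (orthogonal_comp G) Z"
    "s1 * s2 = \<bar>det (matrix T)\<bar>"
proof -
  let ?Y0 = "cball 0 1 \<inter> G" and ?Z0 = "cball 0 1 \<inter> orthogonal_comp G"
  let ?vF = "subspace_volume F" and ?vF' = "subspace_volume (orthogonal_comp F)"
  let ?vG = "subspace_volume G" and ?vG' = "subspace_volume (orthogonal_comp G)"
  let ?d = "\<bar>det (matrix T)\<bar>"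
  have Y0: "compact ?Y0" "?Y0 \<subseteq> G" using compact_ball_sub[OF G] by auto
  have Z0: "compact ?Z0" "?Z0 \<subseteq> orthogonal_comp G" using compact_ball_sub[OF subspace_orthogonal_comp] by auto
  have a: "0 < ?vG ?Y0" by (rule vol_pos[OF G])
  have c: "0 < ?vG' ?Z0" by (rule vol_pos[OF subspace_orthogonal_comp])
  have dpos: "0 < ?d" using d by simp
  have eq: "\<And>Y Z. compact Y \<Longrightarrow> Y \<subseteq> G \<Longrightarrow> compact Z \<Longrightarrow> Z \<subseteq> orthogonal_comp G \<Longrightarrow>
      ?vF (T ` Y) * ?vF' (T ` Z) = ?d * (?vG Y * ?vG' Z)"
    by (rule BLK[OF T G F TG TG'])
  have e0: "?vF (T ` ?Y0) * ?vF' (T ` ?Z0) = ?d * (?vG ?Y0 * ?vG' ?Z0)" by (rule eq[OF Y0 Z0])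
  define s1 where "s1 = ?vF (T ` ?Y0) / ?vG ?Y0"
  define s2 where "s2 = ?vF' (T ` ?Z0) / ?vG' ?Z0"
  show ?thesis
  proof
    fix Y assume Y: "compact Y" "Y \<subseteq> G"
    have "?vF (T ` Y) * ?vF' (T ` ?Z0) = ?d * (?vG Y * ?vG' ?Z0)" by (rule eq[OF Y Z0])
    then show "?vF (T ` Y) = s1 * ?vG Y"
      unfolding s1_def by (rule arith_s1[OF e0 a c dpos])
  next
    fix Z assume Z: "compact Z" "Z \<subseteq> orthogonal_comp G"
    have "?vF (T ` ?Y0) * ?vF' (T ` Z) = ?d * (?vG ?Y0 * ?vG' Z)" by (rule eq[OF Y0 Z])
    then show "?vF' (T ` Z) = s2 * ?vG' Z"
      unfolding s2_def by (rule arith_s2[OF e0 a c dpos])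
  next
    show "s1 * s2 = ?d" unfolding s1_def s2_def by (rule arith_s12[OF e0 a c])
  qed
qed



definition ee :: "nat \<Rightarrow> 'n::finite" where
  "ee = (SOME e. bij_betw e {..<CARD('n)} (UNIV::'n set))"

lemma ee: "bij_betw (ee :: nat \<Rightarrow> 'n::finite) {..<CARD('n)} UNIV"
proof -
  have "\<exists>e::nat \<Rightarrow> 'n. bij_betw e {..<CARD('n)} UNIV"
    using ex_bij_betw_nat_finite[of "UNIV::'n set"] by (auto simp: atLeast0LessThan)
  then show ?thesis unfolding ee_def by (rule someI_ex)
qed

lemma ee_inj: "i < CARD('n) \<Longrightarrow> l < CARD('n) \<Longrightarrow> (ee i :: 'n::finite) = ee l \<longleftrightarrow> i = l"
  using ee by (auto simp: bij_betw_def inj_on_def)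

definition cc :: "(real^'n) set \<Rightarrow> nat \<Rightarrow> real^'n" where
  "cc F i = (if i < dim F then sb F i else sb (orthogonal_comp F) (i - dim F))"

lemma cc:
  fixes F :: "(real^'n) set"
  assumes F: "subspace F"
  shows "onb CARD('n) (cc F)" "\<And>i. i < dim F \<Longrightarrow> cc F i \<in> F"
    "\<And>i. dim F \<le> i \<Longrightarrow> i < CARD('n) \<Longrightarrow> cc F i \<in> orthogonal_comp F"
    "span (cc F ` {..<dim F}) = F"
proof -
  let ?k = "dim F" and ?m = "dim (orthogonal_comp F)"
  have km: "?k + ?m = CARD('n)" by (rule dim_orth[OF F])
  have b: "orthonormal_basis_of F ?k (sb F)" by (rule sb[OF F])
  have b': "orthonormal_basis_of (orthogonal_comp F) ?m (sb (orthogonal_comp F))"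
    by (rule sb[OF subspace_orthogonal_comp])
  show inF: "\<And>i. i < dim F \<Longrightarrow> cc F i \<in> F" using onb_of_in[OF b] by (simp add: cc_def)
  show inF': "\<And>i. dim F \<le> i \<Longrightarrow> i < CARD('n) \<Longrightarrow> cc F i \<in> orthogonal_comp F"
    using onb_of_in[OF b'] km by (simp add: cc_def)
  show "span (cc F ` {..<dim F}) = F"
  proof -
    have "cc F ` {..<dim F} = sb F ` {..<dim F}" by (auto simp: cc_def)
    then show ?thesis using b by (simp add: orthonormal_basis_of_def)
  qed
  show "onb CARD('n) (cc F)"
    unfolding onb_def
  proof (intro allI impI)
    fix i l assume i: "i < CARD('n)" and l: "l < CARD('n)"
    show "cc F i \<bullet> cc F l = (if i = l then 1 else 0)"
    proof (cases "i < ?k"; cases "l < ?k")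
      assume "i < ?k" "l < ?k" then show ?thesis using onb_of_onb[OF b] by (simp add: cc_def onb_def)
    next
      assume "i < ?k" "\<not> l < ?k"
      then show ?thesis using inF[of i] inF'[of l] l by (auto dest: orth_compD)
    next
      assume "\<not> i < ?k" "l < ?k"
      then show ?thesis using inF[of l] inF'[of i] i by (auto simp: inner_commute dest: orth_compD)
    next
      assume "\<not> i < ?k" "\<not> l < ?k"
      then have "i - ?k < ?m" "l - ?k < ?m" "i - ?k = l - ?k \<longleftrightarrow> i = l" using i l km by auto
      then show ?thesis using onb_of_onb[OF b'] \<open>\<not> i < ?k\<close> \<open>\<not> l < ?k\<close> by (simp add: cc_def onb_def)
    qed
  qed
qed

definition UU :: "(nat \<Rightarrow> real^'n) \<Rightarrow> real^'n \<Rightarrow> real^'n" where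
  "UU c x = (\<Sum>i<CARD('n). (x $ ee i) *\<^sub>R c i)"

lemma UU_linear: "linear (UU c)"
  unfolding UU_def by (intro linearI) (simp_all add: sum.distrib scaleR_add_left scale_sum_right)

lemma UU_axis: "i < CARD('n) \<Longrightarrow> UU c (axis (ee i) 1) = (c i :: real^'n)"
proof -
  assume i: "i < CARD('n)"
  have "UU c (axis (ee i) 1) = (\<Sum>l<CARD('n). if l = i then c l else 0)"
    unfolding UU_def by (intro sum.cong) (auto simp: axis_def ee_inj i)
  then show ?thesis using i by simp
qed

lemma UU_orth:
  fixes c :: "nat \<Rightarrow> real^'n"
  assumes c: "onb CARD('n) c"
  shows "orthogonal_transformation (UU c)"
proof -
  let ?n = "CARD('n)"
  have Uc: "UU c y \<bullet> c i = y $ ee i" if "i < ?n" for y i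
  proof -
    have "UU c y \<bullet> c i = (\<Sum>l<?n. y $ ee l * (c l \<bullet> c i))"
      unfolding UU_def inner_sum_left inner_scaleR_left ..
    also have "\<dots> = (\<Sum>l<?n. if l = i then y $ ee l else 0)"
      using c that by (intro sum.cong) (auto simp: onb_def)
    finally show ?thesis using that by simp
  qed
  have innU: "UU c x \<bullet> UU c y = x \<bullet> y" for x y
  proof -
    have "UU c x \<bullet> UU c y = (\<Sum>i<?n. (x $ ee i) * (UU c y \<bullet> c i))"
      unfolding UU_def[of c x] inner_sum_left inner_scaleR_left by (simp add: inner_commute)
    also have "\<dots> = (\<Sum>i<?n. (x $ ee i) * (y $ ee i))"
      by (intro sum.cong) (auto simp: Uc)
    also have "\<dots> = (\<Sum>p\<in>UNIV. x $ p * y $ p)"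
      using sum.reindex_bij_betw[OF ee, of "\<lambda>p. x $ p * y $ p"] by simp
    also have "\<dots> = x \<bullet> y" by (simp add: inner_vec_def)
    finally show ?thesis .
  qed
  show ?thesis using UU_linear innU by (simp add: orthogonal_transformation_def)
qed

lemma UU_span:
  fixes c :: "nat \<Rightarrow> real^'n"
  assumes k: "k \<le> CARD('n)"
  shows "UU c ` span ((\<lambda>i. axis (ee i) 1) ` {..<k}) = span (c ` {..<k})"
proof -
  have "UU c ` span ((\<lambda>i. axis (ee i) 1) ` {..<k}) = span (UU c ` (\<lambda>i. axis (ee i) 1) ` {..<k})"
    by (rule span_linear_image[OF UU_linear, symmetric])
  also have "UU c ` (\<lambda>i. axis (ee i) 1) ` {..<k} = c ` {..<k}"
    using k by (force simp: image_comp UU_axis)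
  finally show ?thesis .
qed

lemma Q_exists:
  fixes G F :: "(real^'n) set"
  assumes G: "subspace G" and F: "subspace F" and d: "dim G = dim F"
  obtains Q where "orthogonal_transformation Q" "Q ` G = F"
proof -
  let ?k = "dim G"
  let ?A = "span ((\<lambda>i. axis (ee i) (1::real)) ` {..<?k})"
  have k: "?k \<le> CARD('n)" using dim_orth[OF G] by simp
  have o1: "orthogonal_transformation (UU (cc G))" by (rule UU_orth[OF cc(1)[OF G]])
  have o2: "orthogonal_transformation (UU (cc F))" by (rule UU_orth[OF cc(1)[OF F]])
  have b1: "bij (UU (cc G))" using o1 by (rule orthogonal_transformation_bij)
  have "G = UU (cc G) ` ?A" using UU_span[OF k, of "cc G"] cc(4)[OF G] by simp
  then have "inv (UU (cc G)) ` G = ?A" using b1 by (metis bij_is_inj image_inv_f_f)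
  then have "(UU (cc F) \<circ> inv (UU (cc G))) ` G = span (cc F ` {..<?k})"
    using UU_span[OF k, of "cc F"] by (metis image_comp)
  also have "\<dots> = F" using cc(4)[OF F] d by simp
  finally have QG: "(UU (cc F) \<circ> inv (UU (cc G))) ` G = F" .
  show ?thesis
    by (rule that[OF orthogonal_transformation_compose[OF o2 orthogonal_transformation_inv[OF o1]] QG])
qed



lemma prod_if_lt:
  fixes c :: real
  assumes "k \<le> n"
  shows "(\<Prod>i<n. if i < k then c else 1) = c ^ k"
  using assms
proof (induction n)
  case 0 then show ?case by simp
next
  case (Suc n)
  show ?case
  proof (cases "k \<le> n")
    case True then show ?thesis using Suc by simp
  next
    case False
    then have "k = Suc n" using Suc.prems by simp
    then have "(\<Prod>i<Suc n. if i < k then c else 1) = (\<Prod>i<Suc n. c)" by (intro prod.cong) auto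
    then show ?thesis using \<open>k = Suc n\<close> by simp
  qed
qed

lemma linear_Tscale:
  assumes E: "subspace E"
  shows "linear (\<lambda>x. c *\<^sub>R oproj E x + oproj (orthogonal_comp E) x)"
  by (intro linearI)
     (simp_all add: linear_add[OF linear_oproj[OF E]] linear_scale[OF linear_oproj[OF E]]
        linear_add[OF linear_oproj[OF subspace_orthogonal_comp]]
        linear_scale[OF linear_oproj[OF subspace_orthogonal_comp]] algebra_simps)

lemma ee_inv: "i < CARD('n) \<Longrightarrow> inv_into {..<CARD('n)} (ee :: nat \<Rightarrow> 'n::finite) (ee i) = i"
  using ee[where 'n='n] by (simp add: bij_betw_def inv_into_f_f)

lemma det_Tscale:
  fixes E :: "(real^'n) set"
  assumes E: "subspace E"
  shows "det (matrix (\<lambda>x. c *\<^sub>R oproj E x + oproj (orthogonal_comp E) x)) = c ^ dim E"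
proof -
  let ?n = "CARD('n)"
  let ?T = "\<lambda>x. c *\<^sub>R oproj E x + oproj (orthogonal_comp E) x"
  let ?U = "UU (cc E)"
  define lam where "lam i = (if i < dim E then c else 1)" for i
  let ?D = "\<lambda>x::real^'n. \<chi> p. lam (inv_into {..<?n} ee p) * x $ p"
  have linT: "linear ?T"
    by (rule linear_Tscale[OF E])
  have linU: "linear ?U" by (rule UU_linear)
  have linD: "linear ?D"
    by (intro linearI) (simp_all add: vec_eq_iff algebra_simps)
  have Tc: "?T (cc E i) = lam i *\<^sub>R cc E i" if i: "i < ?n" for i
  proof (cases "i < dim E")
    case True
    then have "cc E i \<in> E" by (rule cc(2)[OF E])
    moreover then have "cc E i \<in> orthogonal_comp (orthogonal_comp E)" using orthogonal_comp_subset by blast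
    ultimately show ?thesis using True
      by (simp add: oproj_id[OF E] oproj_zero[OF subspace_orthogonal_comp] lam_def)
  next
    case False
    then have "cc E i \<in> orthogonal_comp E" using cc(3)[OF E] i by simp
    then show ?thesis using False
      by (simp add: oproj_id[OF subspace_orthogonal_comp] oproj_zero[OF E] lam_def)
  qed
  have comm: "?T \<circ> ?U = ?U \<circ> ?D"
  proof
    fix x
    have "(?T \<circ> ?U) x = (\<Sum>i<?n. (x $ ee i) *\<^sub>R ?T (cc E i))"
      unfolding UU_def o_def by (simp add: linear_sum[OF linT] linear_scale[OF linT])
    also have "\<dots> = (\<Sum>i<?n. (?D x $ ee i) *\<^sub>R cc E i)"
      by (intro sum.cong) (auto simp: Tc ee_inv)
    also have "\<dots> = (?U \<circ> ?D) x" by (simp add: UU_def)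
    finally show "(?T \<circ> ?U) x = (?U \<circ> ?D) x" .
  qed
  have "det (matrix ?T) * det (matrix ?U) = det (matrix ?U) * det (matrix ?D)"
    using arg_cong[OF comm, of "\<lambda>f. det (matrix f)"] det_comp[OF linT linU] det_comp[OF linU linD] by simp
  moreover have "det (matrix ?U) \<noteq> 0"
    using orthogonal_transformation_det[OF UU_orth[OF cc(1)[OF E]]] by auto
  ultimately have "det (matrix ?T) = det (matrix ?D)" by simp
  also have "det (matrix ?D) = (\<Prod>p\<in>(UNIV::'n set). lam (inv_into {..<?n} ee p))"
    by (subst det_diagonal) (simp_all add: matrix_def axis_def)
  also have "\<dots> = (\<Prod>i<?n. lam (inv_into {..<?n} (ee::nat \<Rightarrow> 'n) (ee i)))"
    using prod.reindex_bij_betw[OF ee, of "\<lambda>p::'n. lam (inv_into {..<?n} ee p)"] by simp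
  also have "\<dots> = (\<Prod>i<?n. lam i)" by (intro prod.cong) (auto simp: ee_inv)
  also have "\<dots> = c ^ dim E"
    unfolding lam_def by (rule prod_if_lt) (use dim_orth[OF E] in simp)
  finally show ?thesis .
qed

lemma vol_scale:
  fixes E :: "(real^'n) set"
  assumes E: "subspace E" and c: "0 < c" and X: "compact X" "X \<subseteq> E"
  shows "subspace_volume E ((\<lambda>x. c *\<^sub>R x) ` X) = c ^ dim E * subspace_volume E X"
proof -
  let ?T = "\<lambda>x. c *\<^sub>R oproj E x + oproj (orthogonal_comp E) x"
  let ?Z = "cball 0 1 \<inter> orthogonal_comp E"
  have linT: "linear ?T"
    by (rule linear_Tscale[OF E])
  have TE: "?T y = c *\<^sub>R y" if "y \<in> E" for y
  proof -
    have "y \<in> orthogonal_comp (orthogonal_comp E)" using that orthogonal_comp_subset by blast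
    then show ?thesis using that by (simp add: oproj_id[OF E] oproj_zero[OF subspace_orthogonal_comp])
  qed
  have TE': "?T z = z" if "z \<in> orthogonal_comp E" for z
    using that by (simp add: oproj_id[OF subspace_orthogonal_comp] oproj_zero[OF E])
  have Z: "compact ?Z" "?Z \<subseteq> orthogonal_comp E" using compact_ball_sub[OF subspace_orthogonal_comp] by auto
  have "subspace_volume E (?T ` X) * subspace_volume (orthogonal_comp E) (?T ` ?Z)
       = \<bar>det (matrix ?T)\<bar> * (subspace_volume E X * subspace_volume (orthogonal_comp E) ?Z)"
  proof (rule BLK[OF linT E E _ _ X Z])
    show "?T ` E \<subseteq> E" using TE E by (auto simp: subspace_scale)
    show "?T ` orthogonal_comp E \<subseteq> orthogonal_comp E" using TE' by auto
  qed
  moreover have "?T ` X = (\<lambda>x. c *\<^sub>R x) ` X" using TE X(2) by (auto intro!: image_cong)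
  moreover have "?T ` ?Z = ?Z" using TE' by (auto simp: image_iff)
  moreover have "0 < subspace_volume (orthogonal_comp E) ?Z" by (rule vol_pos[OF subspace_orthogonal_comp])
  moreover have "\<bar>det (matrix ?T)\<bar> = c ^ dim E" using det_Tscale[OF E, of c] c by simp
  ultimately show ?thesis by simp
qed



lemma oproj_orth_in: "subspace F \<Longrightarrow> oproj (orthogonal_comp F) y \<in> orthogonal_comp F"
  by (rule oproj_in[OF subspace_orthogonal_comp])

lemma orth_orth_sub: "x \<in> F \<Longrightarrow> x \<in> orthogonal_comp (orthogonal_comp F)"
  using orthogonal_comp_subset by blast

lemma det_square_one:
  fixes J :: "real^'n \<Rightarrow> real^'n"
  assumes "linear J" "J \<circ> J = id"
  shows "det (matrix J) * det (matrix J) = 1"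
  using det_comp[OF assms(1,1)] assms(2) by simp

lemma det_Psi:
  fixes f finv :: "real^'n \<Rightarrow> real^'n" and F G :: "(real^'n) set"
  assumes F: "subspace F" and G: "subspace G" and lf: "linear f" and li: "linear finv"
    and fi: "\<And>y. f (finv y) = y" and if': "\<And>x. finv (f x) = x"
    and perp: "\<And>w. w \<in> orthogonal_comp F \<Longrightarrow> finv w \<in> orthogonal_comp G"
  shows "\<bar>det (matrix (\<lambda>x. f x - oproj (orthogonal_comp F) (f (oproj G x))))\<bar> = \<bar>det (matrix f)\<bar>"
proof -
  let ?PF = "oproj F" and ?PF' = "oproj (orthogonal_comp F)" and ?PG = "oproj G"
  have lPF: "linear ?PF" by (rule linear_oproj[OF F])
  have lPF': "linear ?PF'" by (rule linear_oproj[OF subspace_orthogonal_comp])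
  have lPG: "linear ?PG" by (rule linear_oproj[OF G])
  define N where "N y = ?PF' (f (?PG (finv y)))" for y
  define sig where "sig y = y - N y" for y
  define J where "J y = ?PF y - ?PF' y" for y
  define M where "M y = y + N y" for y
  have lN: "linear N" unfolding N_def
    by (intro linearI) (simp_all add: linear_add[OF lPF'] linear_scale[OF lPF'] linear_add[OF lf]
        linear_scale[OF lf] linear_add[OF lPG] linear_scale[OF lPG] linear_add[OF li] linear_scale[OF li])
  have lsig: "linear sig" unfolding sig_def
    by (intro linearI) (simp_all add: linear_add[OF lN] linear_scale[OF lN] algebra_simps)
  have lJ: "linear J" unfolding J_def
    by (intro linearI) (simp_all add: linear_add[OF lPF'] linear_scale[OF lPF'] linear_add[OF lPF]
        linear_scale[OF lPF] algebra_simps)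
  have lM: "linear M" unfolding M_def
    by (intro linearI) (simp_all add: linear_add[OF lN] linear_scale[OF lN] algebra_simps)
  have N0: "N (?PF' y) = 0" for y
  proof -
    have "finv (?PF' y) \<in> orthogonal_comp G" by (rule perp[OF oproj_orth_in[OF F]])
    then have "?PG (finv (?PF' y)) = 0" by (rule oproj_zero[OF G])
    then show ?thesis by (simp add: N_def linear_0[OF lf] linear_0[OF lPF'])
  qed
  have NF': "N y \<in> orthogonal_comp F" for y unfolding N_def by (rule oproj_orth_in[OF F])
  have NN: "N (N y) = 0" for y
    using N0[of "N y"] oproj_id[OF subspace_orthogonal_comp NF'] by simp
  have split: "y = ?PF y + ?PF' y" for y using oproj_comp[OF F, of y] by simp
  have NPF: "N y = N (?PF y)" for y
    using linear_add[OF lN, of "?PF y" "?PF' y"] N0[of y] split[of y] by simp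
  have NJ: "N (J y) = N y" for y
    unfolding J_def using linear_diff[OF lN, of "?PF y" "?PF' y"] N0[of y] NPF[of y] by simp
  have JN: "J (N y) = - N y" for y
  proof -
    have "N y \<in> orthogonal_comp (orthogonal_comp (orthogonal_comp F))"
      by (rule orth_orth_sub[OF NF'])
    then show ?thesis unfolding J_def
      using oproj_zero[OF F NF'] oproj_id[OF subspace_orthogonal_comp NF'] by simp
  qed
  have JJ: "J \<circ> J = id"
  proof
    fix y
    have a: "?PF y \<in> F" "?PF' y \<in> orthogonal_comp F" by (rule oproj_in[OF F], rule oproj_orth_in[OF F])
    have "J (J y) = ?PF (?PF y - ?PF' y) - ?PF' (?PF y - ?PF' y)" by (simp add: J_def)
    also have "\<dots> = ?PF y + ?PF' y"
      using a oproj_id[OF F a(1)] oproj_zero[OF F a(2)] oproj_id[OF subspace_orthogonal_comp a(2)]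
        oproj_zero[OF subspace_orthogonal_comp orth_orth_sub[OF a(1)]]
      by (simp add: linear_diff[OF lPF] linear_diff[OF lPF'])
    finally show "(J \<circ> J) y = id y" using split[of y] by simp
  qed
  have JsJ: "J \<circ> sig \<circ> J = M"
  proof
    fix y
    have "J (J y) = y" using JJ by (metis comp_apply id_apply)
    then show "(J \<circ> sig \<circ> J) y = M y"
      by (simp add: sig_def M_def linear_diff[OF lJ] NJ JN)
  qed
  have sM: "sig \<circ> M = id"
  proof
    fix y show "(sig \<circ> M) y = id y"
      by (simp add: sig_def M_def linear_add[OF lN] NN)
  qed
  have dJ: "det (matrix J) * det (matrix J) = 1" by (rule det_square_one[OF lJ JJ])
  have "det (matrix M) = det (matrix J) * det (matrix sig) * det (matrix J)"
  proof -
    have ls: "linear (J \<circ> sig)" using lJ lsig by (simp add: linear_compose)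
    show ?thesis using JsJ det_comp[OF lJ lsig] det_comp[OF ls lJ] by simp
  qed
  then have "det (matrix M) = det (matrix sig)" using dJ by (simp add: algebra_simps)
  moreover have "det (matrix sig) * det (matrix M) = 1"
    using sM det_comp[OF lsig lM] by simp
  ultimately have "det (matrix sig) * det (matrix sig) = 1" by simp
  then have dsig: "\<bar>det (matrix sig)\<bar> = 1"
    by (auto simp: square_eq_1_iff)
  have Psi: "(\<lambda>x. f x - oproj (orthogonal_comp F) (f (oproj G x))) = sig \<circ> f"
    by (rule ext) (simp add: sig_def N_def if')
  show ?thesis unfolding Psi det_comp[OF lsig lf] using dsig by (simp add: abs_mult)
qed



locale lin_setup =
  fixes f fT h finv :: "real^'n \<Rightarrow> real^'n"
  assumes lf: "linear f" and lfT: "linear fT" and lh: "linear h" and lfi: "linear finv"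
    and fi: "\<And>y. f (finv y) = y" and if': "\<And>x. finv (f x) = x"
    and hT: "\<And>x. h (fT x) = x" and Th: "\<And>x. fT (h x) = x"
    and adj: "\<And>x y. fT x \<bullet> y = x \<bullet> f y"
begin

lemma G_perp:
  assumes F: "subspace F"
  shows "x \<in> orthogonal_comp (fT ` F) \<longleftrightarrow> f x \<in> orthogonal_comp F"
proof
  assume "x \<in> orthogonal_comp (fT ` F)"
  then have "\<And>y. y \<in> F \<Longrightarrow> fT y \<bullet> x = 0" by (auto dest: orth_compD)
  then show "f x \<in> orthogonal_comp F" by (intro orth_compI) (simp add: adj)
next
  assume "f x \<in> orthogonal_comp F"
  then have "\<And>y. y \<in> F \<Longrightarrow> y \<bullet> f x = 0" by (auto dest: orth_compD)
  then show "x \<in> orthogonal_comp (fT ` F)" by (intro orth_compI) (auto simp: adj)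
qed

lemma inj_fT: "inj fT" by (metis hT injI)

lemma dim_G: "dim (fT ` F) = dim F"
  using lfT inj_fT by (metis dim_image_eq inj_on_subset subset_UNIV)

lemma h_G:
  assumes F: "subspace F" and y: "y \<in> fT ` F"
  shows "h y \<in> F"
  using y hT by auto

lemma Psi_G:
  assumes F: "subspace F" and G: "subspace G" and y: "y \<in> G"
  shows "f y - oproj (orthogonal_comp F) (f (oproj G y)) = oproj F (f y)"
  using oproj_id[OF G y] oproj_comp[OF F, of "f y"] by simp

lemma Psi_G':
  assumes F: "subspace F" and G: "subspace G" and z: "z \<in> orthogonal_comp G"
  shows "f z - oproj (orthogonal_comp F) (f (oproj G z)) = f z"
  using oproj_zero[OF G z] linear_0[OF lf] linear_0[OF linear_oproj[OF subspace_orthogonal_comp]] by simp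

end



context lin_setup
begin

lemma main_eq:
  assumes E: "subspace E" and dimE: "dim E = CARD('n) - j" and j: "j < CARD('n)"
    and K: "compact K" and L: "compact L" and hyp: "is_j_projection_body j K L"
  shows "subspace_volume (orthogonal_comp E) (proj_onto (f ` K) (orthogonal_comp E)) =
         subspace_volume E (proj_onto ((\<lambda>x. (\<bar>det (matrix f)\<bar> powr (1 / real (CARD('n) - j))) *\<^sub>R h x) ` L) E)"
proof -
  let ?n = "CARD('n)"
  define c where "c = \<bar>det (matrix f)\<bar> powr (1 / real (CARD('n) - j))"
  define F where "F = orthogonal_comp E"
  have sF: "subspace F" unfolding F_def by (rule subspace_orthogonal_comp)
  have sF': "subspace (orthogonal_comp F)" by (rule subspace_orthogonal_comp)
  have FE: "orthogonal_comp F = E" unfolding F_def by (rule orthogonal_comp_self[OF E])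
  have dimF: "dim F = j" using dim_orth[OF E] dimE j unfolding F_def by simp
  define G where "G = fT ` F"
  have sG: "subspace G" unfolding G_def by (rule linear_subspace_image[OF lfT sF])
  have sG': "subspace (orthogonal_comp G)" by (rule subspace_orthogonal_comp)
  have dimG: "dim G = j" unfolding G_def dim_G dimF ..
  have GG: "orthogonal_comp (orthogonal_comp G) = G" by (rule orthogonal_comp_self[OF sG])
  have dimG': "dim (orthogonal_comp G) = ?n - j" using dim_orth[OF sG] dimG by simp
  have Gperp: "\<And>x. x \<in> orthogonal_comp G \<longleftrightarrow> f x \<in> orthogonal_comp F"
    unfolding G_def by (rule G_perp[OF sF])
  have hyp': "subspace_volume G (proj_onto K G) = subspace_volume (orthogonal_comp G) (proj_onto L (orthogonal_comp G))"
    using hyp sG' dimG' GG unfolding is_j_projection_body_def by (metis DIM_cart DIM_real mult_1_right)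
  define Y where "Y = oproj G ` K"
  define Z where "Z = oproj (orthogonal_comp G) ` L"
  have cY: "compact Y" "Y \<subseteq> G"
    unfolding Y_def using compact_lin_image[OF linear_oproj[OF sG] K] oproj_in[OF sG] by auto
  have cZ: "compact Z" "Z \<subseteq> orthogonal_comp G"
    unfolding Z_def using compact_lin_image[OF linear_oproj[OF sG'] L] oproj_in[OF sG'] by auto
  have hypYZ: "subspace_volume G Y = subspace_volume (orthogonal_comp G) Z"
    using hyp' unfolding Y_def Z_def proj_onto_eq[OF sG] proj_onto_eq[OF sG'] .
  have split: "\<And>S x. subspace S \<Longrightarrow> x = oproj S x + oproj (orthogonal_comp S) x"
    by (simp add: oproj_comp)
  \<comment> \<open>the block-diagonal version of f\<close>
  define Psi where "Psi x = f x - oproj (orthogonal_comp F) (f (oproj G x))" for x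
  have linPsi: "linear Psi" unfolding Psi_def
    by (intro linearI) (simp_all add: linear_add[OF lf] linear_scale[OF lf] linear_add[OF linear_oproj[OF sG]]
        linear_scale[OF linear_oproj[OF sG]] linear_add[OF linear_oproj[OF sF']]
        linear_scale[OF linear_oproj[OF sF']] algebra_simps)
  have PsiG: "Psi y = oproj F (f y)" if "y \<in> G" for y
    unfolding Psi_def by (rule Psi_G[OF sF sG that])
  have PsiG': "Psi z = f z" if "z \<in> orthogonal_comp G" for z
    unfolding Psi_def by (rule Psi_G'[OF sF sG that])
  have PsiGF: "Psi ` G \<subseteq> F" using PsiG oproj_in[OF sF] by auto
  have PsiGF': "Psi ` orthogonal_comp G \<subseteq> orthogonal_comp F" using PsiG' Gperp by auto
  have detPsi: "\<bar>det (matrix Psi)\<bar> = \<bar>det (matrix f)\<bar>"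
    unfolding Psi_def[abs_def]
    by (rule det_Psi[OF sF sG lf lfi fi if']) (simp add: Gperp fi)
  have detf: "det (matrix f) \<noteq> 0" using det_nz_iff_inj[OF lf] if' by (metis injI)
  have detPsi0: "det (matrix Psi) \<noteq> 0" using detPsi detf by auto
  obtain s1 s2 where s1: "\<And>Y. compact Y \<Longrightarrow> Y \<subseteq> G \<Longrightarrow> subspace_volume F (Psi ` Y) = s1 * subspace_volume G Y"
    and s2: "\<And>Z. compact Z \<Longrightarrow> Z \<subseteq> orthogonal_comp G \<Longrightarrow>
        subspace_volume (orthogonal_comp F) (Psi ` Z) = s2 * subspace_volume (orthogonal_comp G) Z"
    and s12: "s1 * s2 = \<bar>det (matrix Psi)\<bar>"
    using BLK_scale[OF linPsi sG sF PsiGF PsiGF' detPsi0] by blast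
  have LHS: "proj_onto (f ` K) (orthogonal_comp E) = Psi ` Y"
  proof -
    have "oproj F (f x) = Psi (oproj G x)" for x
    proof -
      have "f x = f (oproj G x) + f (oproj (orthogonal_comp G) x)"
        using split[OF sG, of x] linear_add[OF lf] by metis
      moreover have "oproj F (f (oproj (orthogonal_comp G) x)) = 0"
        by (rule oproj_zero[OF sF]) (simp add: Gperp[symmetric] oproj_in[OF sG'])
      ultimately show ?thesis
        using PsiG[OF oproj_in[OF sG]] linear_add[OF linear_oproj[OF sF]] by simp
    qed
    then show ?thesis
      unfolding F_def[symmetric] proj_onto_eq[OF sF] Y_def image_image by simp
  qed
  obtain Q where oQ: "orthogonal_transformation Q" and QG: "Q ` G = F"
    using Q_exists[OF sG sF] dimG dimF by metis
  define Qi where "Qi = inv Q"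
  have oQi: "orthogonal_transformation Qi" unfolding Qi_def by (rule orthogonal_transformation_inv[OF oQ])
  have bQ: "bij Q" by (rule orthogonal_transformation_bij[OF oQ])
  have QQi: "Q (Qi w) = w" for w unfolding Qi_def using bQ by (simp add: bij_is_surj surj_f_inv_f)
  have QiQ: "Qi (Q w) = w" for w unfolding Qi_def using bQ by (simp add: bij_is_inj)
  have QiF: "Qi ` F = G" unfolding QG[symmetric] image_image QiQ by simp
  have innQ: "Q a \<bullet> Q b = a \<bullet> b" for a b using oQ by (simp add: orthogonal_transformation_def)
  have linQ: "linear Q" using oQ by (simp add: orthogonal_transformation_def)
  have linQi: "linear Qi" using oQi by (simp add: orthogonal_transformation_def)
  define Psi' where "Psi' x = oproj (orthogonal_comp F) (h x)" for x
  have linPsi': "linear Psi'" unfolding Psi'_def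
    by (intro linearI) (simp_all add: linear_add[OF lh] linear_scale[OF lh]
        linear_add[OF linear_oproj[OF sF']] linear_scale[OF linear_oproj[OF sF']])
  define Gam where "Gam x = Q (oproj G x) + Psi' (oproj (orthogonal_comp G) x)" for x
  have linGam: "linear Gam" unfolding Gam_def
    by (intro linearI) (simp_all add: linear_add[OF linQ] linear_scale[OF linQ] linear_add[OF linPsi']
        linear_scale[OF linPsi'] linear_add[OF linear_oproj[OF sG]] linear_scale[OF linear_oproj[OF sG]]
        linear_add[OF linear_oproj[OF sG']] linear_scale[OF linear_oproj[OF sG']] algebra_simps)
  have GamG: "Gam y = Q y" if "y \<in> G" for y
  proof -
    have "y \<in> orthogonal_comp (orthogonal_comp G)" using that by (rule orth_orth_sub)
    then show ?thesis
      using that by (simp add: Gam_def oproj_id[OF sG] oproj_zero[OF sG'] linear_0[OF linPsi'])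
  qed
  have GamG': "Gam z = Psi' z" if "z \<in> orthogonal_comp G" for z
    using that by (simp add: Gam_def oproj_id[OF sG'] oproj_zero[OF sG] linear_0[OF linQ])
  have GamGF: "Gam ` G \<subseteq> F" using GamG QG by auto
  have GamGF': "Gam ` orthogonal_comp G \<subseteq> orthogonal_comp F"
    using GamG' oproj_in[OF sF'] by (auto simp: Psi'_def)
  have adjF: "adjoint Gam w = Qi w" if w: "w \<in> F" for w
  proof -
    have QiwG: "Qi w \<in> G" using w QiF by blast
    have "x \<bullet> adjoint Gam w = x \<bullet> Qi w" for x
    proof -
      have "x \<bullet> adjoint Gam w = Gam x \<bullet> w" by (rule adjoint_works[OF linGam])
      also have "\<dots> = Q (oproj G x) \<bullet> w + Psi' (oproj (orthogonal_comp G) x) \<bullet> w"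
        by (simp add: Gam_def inner_add_left)
      also have "Psi' (oproj (orthogonal_comp G) x) \<bullet> w = 0"
        using orth_compD[OF oproj_in[OF sF'] w] by (simp add: Psi'_def inner_commute)
      also have "Q (oproj G x) \<bullet> w = oproj G x \<bullet> Qi w"
        using innQ[of "oproj G x" "Qi w"] QQi by simp
      also have "oproj G x \<bullet> Qi w = x \<bullet> Qi w"
      proof -
        have "oproj (orthogonal_comp G) x \<bullet> Qi w = 0"
          using orth_compD[OF oproj_in[OF sG'] QiwG] by (simp add: inner_commute)
        then show ?thesis using split[OF sG, of x] by (metis add.right_neutral inner_add_left)
      qed
      finally show ?thesis by simp
    qed
    then show ?thesis using vector_eq_ldot[of "adjoint Gam w" "Qi w"] by simp
  qed
  have adjG': "adjoint Gam (f z) = z" if z: "z \<in> orthogonal_comp G" for z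
  proof -
    have fzF: "f z \<in> orthogonal_comp F" using z Gperp by simp
    have "x \<bullet> adjoint Gam (f z) = x \<bullet> z" for x
    proof -
      let ?v = "oproj (orthogonal_comp G) x"
      have "x \<bullet> adjoint Gam (f z) = Gam x \<bullet> f z" by (rule adjoint_works[OF linGam])
      also have "\<dots> = Q (oproj G x) \<bullet> f z + Psi' ?v \<bullet> f z"
        by (simp add: Gam_def inner_add_left)
      also have "Q (oproj G x) \<bullet> f z = 0"
      proof -
        have "Q (oproj G x) \<in> F" using QG oproj_in[OF sG] by blast
        then show ?thesis using orth_compD[OF fzF] by simp
      qed
      also have "Psi' ?v \<bullet> f z = h ?v \<bullet> f z"
      proof -
        have "h ?v = oproj F (h ?v) + Psi' ?v" unfolding Psi'_def by (rule split[OF sF])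
        moreover have "oproj F (h ?v) \<bullet> f z = 0" using orth_compD[OF fzF oproj_in[OF sF]] .
        ultimately show ?thesis by (metis add_0 inner_add_left)
      qed
      also have "h ?v \<bullet> f z = ?v \<bullet> z" using adj[of "h ?v" z] Th by simp
      also have "?v \<bullet> z = x \<bullet> z"
      proof -
        have "oproj G x \<bullet> z = 0" using orth_compD[OF z oproj_in[OF sG]] .
        then show ?thesis using split[OF sG, of x] by (metis add_0 inner_add_left)
      qed
      finally show ?thesis by simp
    qed
    then show ?thesis using vector_eq_ldot[of "adjoint Gam (f z)" z] by simp
  qed
  define Xi where "Xi = adjoint Gam \<circ> Psi"
  have linadj: "linear (adjoint Gam)" by (rule adjoint_linear[OF linGam])
  have linXi: "linear Xi" unfolding Xi_def using linadj linPsi by (simp add: linear_compose)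
  have XiG: "Xi y = Qi (Psi y)" if "y \<in> G" for y
    unfolding Xi_def using adjF PsiGF that by auto
  have XiG': "Xi z = z" if "z \<in> orthogonal_comp G" for z
    unfolding Xi_def using adjG' PsiG' that by simp
  have XiGG: "Xi ` G \<subseteq> G"
  proof
    fix u assume "u \<in> Xi ` G"
    then obtain y where y: "y \<in> G" "u = Xi y" by auto
    then have "Psi y \<in> F" using PsiGF by auto
    then have "Qi (Psi y) \<in> G" using QiF by blast
    then show "u \<in> G" using XiG[OF y(1)] y(2) by simp
  qed
  have XiGG': "Xi ` orthogonal_comp G \<subseteq> orthogonal_comp G" using XiG' by auto
  have detXi: "det (matrix Xi) = det (matrix Gam) * det (matrix Psi)"
    unfolding Xi_def det_comp[OF linadj linPsi] matrix_adjoint[OF linGam] by simp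
  have injPsi: "inj Psi" using det_nz_iff_inj[OF linPsi] detPsi0 by simp
  have injQi: "inj Qi" using oQi by (rule orthogonal_transformation_inj)
  have Xi0: "x = 0" if "Xi x = 0" for x
  proof -
    let ?a = "oproj G x" and ?b = "oproj (orthogonal_comp G) x"
    have "Xi x = Xi ?a + Xi ?b" using split[OF sG, of x] linear_add[OF linXi] by metis
    also have "\<dots> = Qi (Psi ?a) + ?b" using XiG[OF oproj_in[OF sG]] XiG'[OF oproj_in[OF sG']] by simp
    finally have "Qi (Psi ?a) + ?b = 0 + 0" using that by simp
    moreover have "Qi (Psi ?a) \<in> G" using XiG[OF oproj_in[OF sG]] XiGG oproj_in[OF sG] by (metis image_subset_iff)
    ultimately have "Qi (Psi ?a) = 0 \<and> ?b = 0"
      using decomp_unique[OF sG _ subspace_0[OF sG] oproj_in[OF sG'] subspace_0[OF sG']] by blast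
    then have "Psi ?a = 0" "?b = 0"
      using injQi linear_0[OF linQi] by (metis injD, simp)
    then have "?a = 0" using injPsi linear_0[OF linPsi] by (metis injD)
    then show ?thesis using split[OF sG, of x] \<open>?b = 0\<close> by simp
  qed
  have injXi: "inj Xi"
  proof (rule injI)
    fix a b assume "Xi a = Xi b"
    then have "Xi (a - b) = 0" by (simp add: linear_diff[OF linXi])
    from Xi0[OF this] show "a = b" by simp
  qed
  have detXi0: "det (matrix Xi) \<noteq> 0" using det_nz_iff_inj[OF linXi] injXi by simp
  have detGam0: "det (matrix Gam) \<noteq> 0" using detXi0 detXi by auto
  obtain t1 t2 where t1: "\<And>Y. compact Y \<Longrightarrow> Y \<subseteq> G \<Longrightarrow> subspace_volume F (Gam ` Y) = t1 * subspace_volume G Y"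
    and t2: "\<And>Z. compact Z \<Longrightarrow> Z \<subseteq> orthogonal_comp G \<Longrightarrow>
        subspace_volume (orthogonal_comp F) (Gam ` Z) = t2 * subspace_volume (orthogonal_comp G) Z"
    and t12: "t1 * t2 = \<bar>det (matrix Gam)\<bar>"
    using BLK_scale[OF linGam sG sF GamGF GamGF' detGam0] by blast
  obtain u1 u2 where u1: "\<And>Y. compact Y \<Longrightarrow> Y \<subseteq> G \<Longrightarrow> subspace_volume G (Xi ` Y) = u1 * subspace_volume G Y"
    and u2: "\<And>Z. compact Z \<Longrightarrow> Z \<subseteq> orthogonal_comp G \<Longrightarrow>
        subspace_volume (orthogonal_comp G) (Xi ` Z) = u2 * subspace_volume (orthogonal_comp G) Z"
    and u12: "u1 * u2 = \<bar>det (matrix Xi)\<bar>"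
    using BLK_scale[OF linXi sG sG XiGG XiGG' detXi0] by blast
  let ?Y0 = "cball 0 1 \<inter> G" and ?Z0 = "cball 0 1 \<inter> orthogonal_comp G"
  have Y0: "compact ?Y0" "?Y0 \<subseteq> G" using compact_ball_sub[OF sG] by auto
  have Z0: "compact ?Z0" "?Z0 \<subseteq> orthogonal_comp G" using compact_ball_sub[OF sG'] by auto
  have vY0: "0 < subspace_volume G ?Y0" by (rule vol_pos[OF sG])
  have vZ0: "0 < subspace_volume (orthogonal_comp G) ?Z0" by (rule vol_pos[OF sG'])
  have "t1 * subspace_volume G ?Y0 = subspace_volume F (Gam ` ?Y0)" using t1[OF Y0] by simp
  also have "Gam ` ?Y0 = Q ` ?Y0" using GamG by auto
  also have "subspace_volume F (Q ` ?Y0) = subspace_volume G ?Y0"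
    using vol_iso[OF oQ sG Y0] QG by simp
  finally have "t1 = 1" using vY0 by simp
  then have t2Gam: "t2 = \<bar>det (matrix Gam)\<bar>" using t12 by simp
  have "u2 * subspace_volume (orthogonal_comp G) ?Z0 = subspace_volume (orthogonal_comp G) (Xi ` ?Z0)"
    using u2[OF Z0] by simp
  also have "Xi ` ?Z0 = ?Z0" using XiG' by auto
  finally have "u2 = 1" using vZ0 by simp
  then have u1Xi: "u1 = \<bar>det (matrix Xi)\<bar>" using u12 by simp
  have cPY0: "compact (Psi ` ?Y0)" by (rule compact_lin_image[OF linPsi Y0(1)])
  have "u1 * subspace_volume G ?Y0 = subspace_volume G (Xi ` ?Y0)" using u1[OF Y0] by simp
  also have "Xi ` ?Y0 = Qi ` Psi ` ?Y0" using XiG by (auto simp: image_iff)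
  also have "subspace_volume G (Qi ` Psi ` ?Y0) = subspace_volume F (Psi ` ?Y0)"
    using vol_iso[OF oQi sF cPY0] PsiGF QiF Y0 by auto
  also have "\<dots> = s1 * subspace_volume G ?Y0" using s1[OF Y0] .
  finally have "u1 = s1" using vY0 by simp
  then have s1val: "s1 = t2 * \<bar>det (matrix f)\<bar>"
    using u1Xi detXi t2Gam detPsi by (simp add: abs_mult)
  have cpos: "0 < c" unfolding c_def using detf by simp
  have cpow: "c ^ (?n - j) = \<bar>det (matrix f)\<bar>"
  proof -
    have "c ^ (?n - j) = c powr real (?n - j)" using cpos by (simp add: powr_realpow)
    also have "\<dots> = \<bar>det (matrix f)\<bar> powr (1 / real (?n - j) * real (?n - j))"
      unfolding c_def by (rule powr_powr)
    also have "\<dots> = \<bar>det (matrix f)\<bar>" using j detf by simp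
    finally show ?thesis .
  qed
  have RHS: "proj_onto ((\<lambda>x. c *\<^sub>R h x) ` L) E = (\<lambda>v. c *\<^sub>R v) ` (Gam ` Z)"
  proof -
    have "oproj (orthogonal_comp F) (c *\<^sub>R h x) = c *\<^sub>R Gam (oproj (orthogonal_comp G) x)" for x
    proof -
      have "h x = h (oproj G x) + h (oproj (orthogonal_comp G) x)"
        using split[OF sG, of x] linear_add[OF lh] by metis
      moreover have "oproj (orthogonal_comp F) (h (oproj G x)) = 0"
      proof (rule oproj_zero[OF sF'])
        have "h (oproj G x) \<in> F" using h_G[OF sF] oproj_in[OF sG] unfolding G_def by blast
        then show "h (oproj G x) \<in> orthogonal_comp (orthogonal_comp F)" by (rule orth_orth_sub)
      qed
      ultimately have "oproj (orthogonal_comp F) (h x) = Psi' (oproj (orthogonal_comp G) x)"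
        using linear_add[OF linear_oproj[OF sF']] by (simp add: Psi'_def)
      then show ?thesis
        using GamG'[OF oproj_in[OF sG']] linear_scale[OF linear_oproj[OF sF']] by simp
    qed
    then show ?thesis
      unfolding FE[symmetric] proj_onto_eq[OF sF'] Z_def image_image by simp
  qed
  have GZ: "compact (Gam ` Z)" "Gam ` Z \<subseteq> E" using compact_lin_image[OF linGam cZ(1)] GamGF' cZ(2) FE by auto
  have "subspace_volume E (proj_onto ((\<lambda>x. c *\<^sub>R h x) ` L) E) = c ^ dim E * subspace_volume E (Gam ` Z)"
    unfolding RHS by (rule vol_scale[OF E cpos GZ])
  also have "\<dots> = \<bar>det (matrix f)\<bar> * (t2 * subspace_volume (orthogonal_comp G) Z)"
    using t2[OF cZ] FE dimE cpow by simp
  also have "\<dots> = subspace_volume (orthogonal_comp E) (proj_onto (f ` K) (orthogonal_comp E))"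
    unfolding LHS using s1[OF cY] s1val hypYZ F_def by simp
  finally show ?thesis unfolding c_def by simp
qed

end



lemma matrix_inv_props:
  fixes A :: "real^'n^'n"
  assumes "invertible A"
  shows "A ** matrix_inv A = mat 1" "matrix_inv A ** A = mat 1"
proof -
  have "\<exists>A'. A ** A' = mat 1 \<and> A' ** A = mat 1" using assms by (simp add: invertible_def)
  then have "A ** matrix_inv A = mat 1 \<and> matrix_inv A ** A = mat 1"
    unfolding matrix_inv_def by (rule someI_ex)
  then show "A ** matrix_inv A = mat 1" "matrix_inv A ** A = mat 1" by auto
qed

lemma lin_setup_A:
  fixes A :: "real^'n^'n"
  assumes A: "invertible A"
  shows "lin_setup ((*v) A) ((*v) (transpose A)) ((*v) (matrix_inv (transpose A))) ((*v) (matrix_inv A))"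
proof -
  have AT: "invertible (transpose A)" by (rule transpose_invertible[OF A])
  note i1 = matrix_inv_props[OF A] and i2 = matrix_inv_props[OF AT]
  have a: "A *v (matrix_inv A *v y) = y" for y by (simp add: matrix_vector_mul_assoc i1)
  have b: "matrix_inv A *v (A *v x) = x" for x by (simp add: matrix_vector_mul_assoc i1)
  have c: "matrix_inv (transpose A) *v (transpose A *v x) = x" for x
    by (simp only: matrix_vector_mul_assoc i2 matrix_vector_mul_lid)
  have d: "transpose A *v (matrix_inv (transpose A) *v x) = x" for x
    by (simp only: matrix_vector_mul_assoc i2 matrix_vector_mul_lid)
  have e: "(transpose A *v x) \<bullet> y = x \<bullet> (A *v y)" for x y by (simp add: dot_lmul_matrix)
  show ?thesis
    by (rule lin_setup.intro[OF matrix_vector_mul_linear matrix_vector_mul_linear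
          matrix_vector_mul_linear matrix_vector_mul_linear a b c d e])
qed

lemma part1:
  fixes A :: "real^'n^'n" and K L :: "(real^'n) set" and j :: nat
  assumes j: "j < CARD('n)" and A: "invertible A" and K: "compact K" and L: "compact L"
    and hyp: "is_j_projection_body j K L"
  shows "is_j_projection_body j ((\<lambda>x. A *v x) ` K)
           ((\<lambda>x. (\<bar>det A\<bar> powr (1 / real (CARD('n) - j))) *\<^sub>R (matrix_inv (transpose A) *v x)) ` L)"
proof -
  interpret lin_setup "(*v) A" "(*v) (transpose A)" "(*v) (matrix_inv (transpose A))" "(*v) (matrix_inv A)"
    by (rule lin_setup_A[OF A])
  show ?thesis
    unfolding is_j_projection_body_def
  proof (intro allI impI)
    fix E :: "(real^'n) set" assume E: "subspace E \<and> dim E = DIM(real^'n) - j"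
    show "subspace_volume (orthogonal_comp E) (proj_onto ((\<lambda>x. A *v x) ` K) (orthogonal_comp E)) =
          subspace_volume E (proj_onto ((\<lambda>x. (\<bar>det A\<bar> powr (1 / real (CARD('n) - j))) *\<^sub>R (matrix_inv (transpose A) *v x)) ` L) E)"
      using main_eq[of E j K L] E j K L hyp by simp
  qed
qed

lemma infdist_lin:
  fixes f :: "real^'n \<Rightarrow> real^'n"
  assumes lf: "linear f" and B: "0 < B" "\<And>x. norm (f x) \<le> B * norm x" and T: "T \<noteq> {}"
  shows "infdist (f x) (f ` T) \<le> B * infdist x T"
proof -
  have "infdist (f x) (f ` T) / B \<le> infdist x T"
    unfolding infdist_notempty[OF T]
  proof (rule cINF_greatest[OF T])
    fix t assume t: "t \<in> T"
    have "infdist (f x) (f ` T) \<le> dist (f x) (f t)" using t by (intro infdist_le) auto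
    also have "\<dots> = norm (f (x - t))" by (simp add: dist_norm linear_diff[OF lf])
    also have "\<dots> \<le> B * dist x t" using B(2)[of "x - t"] by (simp add: dist_norm)
    finally show "infdist (f x) (f ` T) / B \<le> dist x t" using B(1) by (simp add: field_simps)
  qed
  then show ?thesis using B(1) by (simp add: field_simps)
qed

lemma bdd_infdist:
  fixes S T :: "(real^'n) set"
  assumes S: "compact S" and T: "T \<noteq> {}"
  shows "bdd_above ((\<lambda>x. infdist x T) ` S)"
proof -
  obtain t where t: "t \<in> T" using T by auto
  obtain M where M: "\<And>x. x \<in> S \<Longrightarrow> norm x \<le> M" using compact_imp_bounded[OF S] by (auto simp: bounded_iff)
  have "infdist x T \<le> M + norm t" if "x \<in> S" for x
  proof -
    have "infdist x T \<le> dist x t" by (rule infdist_le[OF t])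
    also have "\<dots> \<le> norm x + norm t" by (simp add: dist_norm norm_triangle_ineq4)
    finally show ?thesis using M[OF that] by simp
  qed
  then show ?thesis by (auto simp: bdd_above_def)
qed

lemma sup_infdist_lin:
  fixes f :: "real^'n \<Rightarrow> real^'n"
  assumes lf: "linear f" and B: "0 < B" "\<And>x. norm (f x) \<le> B * norm x"
    and S: "compact S" "S \<noteq> {}" and T: "T \<noteq> {}"
  shows "(SUP x\<in>f ` S. infdist x (f ` T)) \<le> B * (SUP x\<in>S. infdist x T)"
proof -
  have "(SUP x\<in>f ` S. infdist x (f ` T)) = (SUP x\<in>S. infdist (f x) (f ` T))"
    by (simp add: image_image)
  also have "\<dots> \<le> B * (SUP x\<in>S. infdist x T)"
  proof (rule cSUP_least[OF S(2)])
    fix x assume x: "x \<in> S"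
    have "infdist (f x) (f ` T) \<le> B * infdist x T" by (rule infdist_lin[OF lf B T])
    also have "\<dots> \<le> B * (SUP x\<in>S. infdist x T)"
      using cSUP_upper[OF x bdd_infdist[OF S(1) T]] B(1) by simp
    finally show "infdist (f x) (f ` T) \<le> B * (SUP x\<in>S. infdist x T)" .
  qed
  finally show ?thesis .
qed

lemma hd_lin:
  fixes f :: "real^'n \<Rightarrow> real^'n"
  assumes lf: "linear f" and B: "0 < B" "\<And>x. norm (f x) \<le> B * norm x"
    and S: "compact S" "S \<noteq> {}" and T: "compact T" "T \<noteq> {}"
  shows "hausdorff_dist (f ` S) (f ` T) \<le> B * hausdorff_dist S T"
proof -
  have 1: "(SUP x\<in>f ` S. infdist x (f ` T)) \<le> B * (SUP x\<in>S. infdist x T)"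
    by (rule sup_infdist_lin[OF lf B S T(2)])
  have 2: "(SUP x\<in>f ` T. infdist x (f ` S)) \<le> B * (SUP x\<in>T. infdist x S)"
    by (rule sup_infdist_lin[OF lf B T S(2)])
  have "B * (SUP x\<in>S. infdist x T) \<le> B * hausdorff_dist S T"
    "B * (SUP x\<in>T. infdist x S) \<le> B * hausdorff_dist S T"
    using B(1) by (simp_all add: hausdorff_dist_def)
  then show ?thesis using 1 2 unfolding hausdorff_dist_def[of "f ` S"] by simp
qed

lemma hd_nonneg:
  fixes S T :: "(real^'n) set"
  assumes S: "compact S" "S \<noteq> {}" and T: "T \<noteq> {}"
  shows "0 \<le> hausdorff_dist S T"
proof -
  obtain x where x: "x \<in> S" using S by auto
  have "0 \<le> infdist x T" by (rule infdist_nonneg)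
  also have "\<dots> \<le> (SUP x\<in>S. infdist x T)" by (rule cSUP_upper[OF x bdd_infdist[OF S(1) T]])
  finally show ?thesis by (simp add: hausdorff_dist_def)
qed



lemma P_image:
  fixes A :: "real^'n^'n" and K :: "(real^'n) set"
  assumes j: "j < CARD('n)" and A: "invertible A"
    and K: "convex_body K \<and> origin_symmetric K \<and>
            (\<exists>L. convex_body L \<and> origin_symmetric L \<and> interior L \<noteq> {} \<and> is_j_projection_body j K L)"
  shows "convex_body ((\<lambda>x. A *v x) ` K) \<and> origin_symmetric ((\<lambda>x. A *v x) ` K) \<and>
            (\<exists>L. convex_body L \<and> origin_symmetric L \<and> interior L \<noteq> {} \<and> is_j_projection_body j ((\<lambda>x. A *v x) ` K) L)"
proof -
  obtain L where L: "convex_body L" "origin_symmetric L" "interior L \<noteq> {}" "is_j_projection_body j K L"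
    using K by blast
  have cK: "compact K" "convex K" "K \<noteq> {}" using K by (auto simp: convex_body_def)
  have cL: "compact L" "convex L" "L \<noteq> {}" using L by (auto simp: convex_body_def)
  define c where "c = \<bar>det A\<bar> powr (1 / real (CARD('n) - j))"
  define g where "g x = c *\<^sub>R (matrix_inv (transpose A) *v x)" for x :: "real^'n"
  have detA: "det A \<noteq> 0" using A by (simp add: invertible_det_nz)
  have cpos: "0 < c" unfolding c_def using detA by simp
  have lg: "linear g" unfolding g_def
    by (intro linearI) (simp_all add: matrix_vector_right_distrib scaleR_add_right matrix_vector_mult_scaleR)
  have ig: "inj g"
  proof (rule injI)
    fix a b assume "g a = g b"
    then have "matrix_inv (transpose A) *v a = matrix_inv (transpose A) *v b" using cpos by (simp add: g_def)
    then have "transpose A *v (matrix_inv (transpose A) *v a) = transpose A *v (matrix_inv (transpose A) *v b)"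
      by simp
    then show "a = b" using matrix_inv_props(1)[OF transpose_invertible[OF A]]
      by (simp add: matrix_vector_mul_assoc)
  qed
  have lA: "linear ((*v) A)" by simp
  have "convex_body ((\<lambda>x. A *v x) ` K)"
    using compact_lin_image[OF lA cK(1)] convex_linear_image[OF lA cK(2)] cK(3)
    by (simp add: convex_body_def)
  moreover have "origin_symmetric ((\<lambda>x. A *v x) ` K)"
    unfolding origin_symmetric_def
  proof
    fix y assume "y \<in> (\<lambda>x. A *v x) ` K"
    then obtain x where x: "x \<in> K" "y = A *v x" by auto
    then have "- x \<in> K" using K by (simp add: origin_symmetric_def)
    moreover have "- y = A *v (- x)" using x linear_neg[OF lA] by simp
    ultimately show "- y \<in> (\<lambda>x. A *v x) ` K" by blast
  qed
  moreover have "convex_body (g ` L)"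
    using compact_lin_image[OF lg cL(1)] convex_linear_image[OF lg cL(2)] cL(3)
    by (simp add: convex_body_def)
  moreover have "origin_symmetric (g ` L)"
    using L(2) linear_neg[OF lg] by (auto simp: origin_symmetric_def image_iff) (metis)
  moreover have "interior (g ` L) \<noteq> {}"
    using interior_injective_linear_image[OF lg ig, of L] L(3) by simp
  moreover have "is_j_projection_body j ((\<lambda>x. A *v x) ` K) (g ` L)"
    unfolding g_def c_def by (rule part1[OF j A cK(1) cL(1) L(4)])
  ultimately show ?thesis by blast
qed

theorem theorem5p1:
  fixes A :: "real^'n^'n" and K L :: "(real^'n) set" and j :: nat
  assumes "CARD('n) \<ge> 3"
    and "1 \<le> j" and "j \<le> CARD('n) - 1"
    and "invertible A"
    and "convex_body K" and "origin_symmetric K" and "interior K \<noteq> {}"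
    and "convex_body L" and "origin_symmetric L" and "interior L \<noteq> {}"
    and "is_j_projection_body j K L"
  shows "is_j_projection_body j ((\<lambda>x. A *v x) ` K)
           ((\<lambda>x. (\<bar>det A\<bar> powr (1 / real (CARD('n) - j))) *\<^sub>R (matrix_inv (transpose A) *v x)) ` L)
         \<and> (\<forall>C \<in> j_projection_class j. (\<lambda>x. A *v x) ` C \<in> j_projection_class j)"
proof
  have j: "j < CARD('n)" using assms(1,3) by simp
  have A: "invertible A" by fact
  show "is_j_projection_body j ((\<lambda>x. A *v x) ` K)
           ((\<lambda>x. (\<bar>det A\<bar> powr (1 / real (CARD('n) - j))) *\<^sub>R (matrix_inv (transpose A) *v x)) ` L)"
    using part1[OF j A _ _ assms(11)] assms(5,8) by (simp add: convex_body_def)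
  show "\<forall>C \<in> j_projection_class j. (\<lambda>x. A *v x) ` C \<in> j_projection_class j"
  proof
    fix C :: "(real^'n) set" assume "C \<in> j_projection_class j"
    then obtain X where C: "compact C" "C \<noteq> {}"
      and X: "\<And>i. convex_body (X i) \<and> origin_symmetric (X i) \<and>
            (\<exists>L. convex_body L \<and> origin_symmetric L \<and> interior L \<noteq> {} \<and> is_j_projection_body j (X i) L)"
      and lim: "(\<lambda>i. hausdorff_dist (X i) C) \<longlonglongrightarrow> 0"
      unfolding j_projection_class_def Let_def by blast
    have lA: "linear ((*v) A)" by simp
    obtain B where B: "0 < B" "\<And>x. norm (A *v x) \<le> B * norm x"
      using linear_bounded_pos[OF lA] by blast
    have cX: "compact (X i)" "X i \<noteq> {}" for i using X[of i] by (auto simp: convex_body_def)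
    have "(\<lambda>i. hausdorff_dist ((\<lambda>x. A *v x) ` X i) ((\<lambda>x. A *v x) ` C)) \<longlonglongrightarrow> 0"
    proof (rule Lim_null_comparison)
      show "\<forall>\<^sub>F i in sequentially. norm (hausdorff_dist ((\<lambda>x. A *v x) ` X i) ((\<lambda>x. A *v x) ` C))
               \<le> B * hausdorff_dist (X i) C"
      proof (rule always_eventually, rule allI)
        fix i
        have "0 \<le> hausdorff_dist ((\<lambda>x. A *v x) ` X i) ((\<lambda>x. A *v x) ` C)"
          using hd_nonneg[OF compact_lin_image[OF lA cX(1)]] cX(2) C(2) by auto
        moreover have "hausdorff_dist ((\<lambda>x. A *v x) ` X i) ((\<lambda>x. A *v x) ` C) \<le> B * hausdorff_dist (X i) C"
          by (rule hd_lin[OF lA B cX C])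
        ultimately show "norm (hausdorff_dist ((\<lambda>x. A *v x) ` X i) ((\<lambda>x. A *v x) ` C))
               \<le> B * hausdorff_dist (X i) C" by simp
      qed
      show "(\<lambda>i. B * hausdorff_dist (X i) C) \<longlonglongrightarrow> 0"
        using tendsto_mult[OF tendsto_const[of B] lim] by simp
    qed
    moreover have "compact ((\<lambda>x. A *v x) ` C)" by (rule compact_lin_image[OF lA C(1)])
    moreover have "(\<lambda>x. A *v x) ` C \<noteq> {}" using C(2) by simp
    moreover have "\<And>i. convex_body ((\<lambda>x. A *v x) ` X i) \<and> origin_symmetric ((\<lambda>x. A *v x) ` X i) \<and>
            (\<exists>L. convex_body L \<and> origin_symmetric L \<and> interior L \<noteq> {} \<and> is_j_projection_body j ((\<lambda>x. A *v x) ` X i) L)"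
      by (rule P_image[OF j A X])
    ultimately show "(\<lambda>x. A *v x) ` C \<in> j_projection_class j"
      unfolding j_projection_class_def Let_def
      by (intro CollectI conjI exI[of _ "\<lambda>i. (\<lambda>x. A *v x) ` X i"]) auto
  qed
qed



end
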